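(* Suppose all transmitters share a common shaping lattice, $\Lambda_{s,1}=\cdots=\Lambda_{s,L}$. Then $\mathcal{R}_{\mathrm{cpr}}=\mathcal{R}_{\mathrm{SW}}$, where $\mathcal{R}_{\mathrm{cpr}}=\{R\in\mathbb{R}^L:\sum_{m\in\mathcal{S}}R_m\ge f(\mathcal{S})\ \forall\mathcal{S}\subseteq\mathcal{I}_L\}$ with $f(\mathcal{S})=\sum_{k=1}^{2L-1}\big(\operatorname{rank}A(\mathcal{I}_L,\mathcal{L}_k)-\operatorname{rank}A(\overline{\mathcal{S}},\mathcal{L}_k)\big)r_{v,k}$, and $\mathcal{R}_{\mathrm{SW}}=\{R\in\mathbb{R}^L:\sum_{m\in\mathcal{S}}R_m\ge H(\{v_m\}_{m\in\mathcal{S}}\mid\{v_m\}_{m\in\overline{\mathcal{S}}})\ \forall\mathcal{S}\subseteq\mathcal{I}_L\}$ is the Slepian–Wolf region.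
   Context: Notation: for a lattice $\Lambda\subset\mathbb{R}^n$, $Q_\Lambda(x)$ is the nearest point of $\Lambda$ to $x$ (ties broken by a fixed rule), $x\bmod\Lambda=x-Q_\Lambda(x)$, $\mathcal{V}(\Lambda)=\{x:Q_\Lambda(x)=0\}$. $\mathcal{I}_j=\{1,\dots,j\}$, $\mathcal{I}_0=\emptyset$, $\overline{\mathcal{S}}=\mathcal{I}_L\setminus\mathcal{S}$. Logarithms base 2. $H(\cdot)$, $H(\cdot\mid\cdot)$ are $\frac1n$ times Shannon (conditional) entropy in bits; conditioning on an empty collection is unconditional. Lattice chain (Construction A): $\gamma$ prime, $L,n,K$ positive integers, $G\in\mathbb{F}_\gamma^{n\times K}$ of full column rank over $\mathbb{F}_\gamma$, $B\in\mathbb{R}^{n\times n}$ invertible, $g:\mathbb{F}_\gamma\to\{0,\dots,\gamma-1\}$ natural bijection entrywise; for $0\le i_1\le\cdots\le i_{2L}\le K$, $\Lambda_k=B(\gamma^{-1}g(\{G_kw:w\in\mathbb{F}_\gamma^{i_k}\})+\mathbb{Z}^n)$, $G_k$ = first $i_k$ columns of $G$; $\Lambda_1\subseteq\cdots\subseteq\Lambda_{2L}$; $\mathcal{V}_k=\mathcal{V}(\Lambda_k)$; $r_{v,k}=\frac1n\log|\Lambda_{k+1}\cap\mathcal{V}_k|$. Sources: $\pi$ permutation of $\mathcal{I}_{2L}$ with $\Lambda_{\pi(2l-1)}\subseteq\Lambda_{\pi(2l)}$; $\Lambda_{s,l}=\Lambda_{\pi(2l-1)}$, $\Lambda_{c,l}=\Lambda_{\pi(2l)}$,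 $\mathcal{C}_l=\Lambda_{c,l}\cap\mathcal{V}(\Lambda_{s,l})$. $t_1,\dots,t_L$ independent, $t_l$ uniform on $\mathcal{C}_l$; $\beta_l>0$; dithers $d_l$ uniform on $\mathcal{V}(\Lambda_{s,l})/\beta_l$, independent of each other and of the $t_l$. $\mathcal{L}_k=\{l:\Lambda_{s,l}\subseteq\Lambda_k\subseteq\Lambda_{k+1}\subseteq\Lambda_{c,l}\}$. Computed codewords: $A=(a_{ml})\in\mathbb{Z}^{L\times L}$ invertible mod $\gamma$; $A(\mathcal{S},\mathcal{S}')$ submatrix with rows $\mathcal{S}$, columns $\mathcal{S}'$; ranks over $\mathbb{F}_\gamma$ after reduction mod $\gamma$, empty matrices have rank $0$. $v_m=\big(\sum_l a_{ml}(t_l-Q_{\Lambda_{s,l}}(t_l-\beta_ld_l))\big)\bmod\Lambda_1$. *)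

theory Defs
  imports "HOL-Probability.Probability" "HOL-Combinatorics.Permutations"
begin

definition indep_mod :: "nat \<Rightarrow> ('r \<Rightarrow> 'c \<Rightarrow> int) \<Rightarrow> 'r set \<Rightarrow> 'c set \<Rightarrow> bool" where
  "indep_mod p M R J \<longleftrightarrow>
     (\<forall>c::'c \<Rightarrow> int. (\<forall>r\<in>R. (\<Sum>j\<in>J. c j * M r j) mod int p = 0)
         \<longrightarrow> (\<forall>j\<in>J. c j mod int p = 0))"

definition rank_mod :: "nat \<Rightarrow> ('r \<Rightarrow> 'c \<Rightarrow> int) \<Rightarrow> 'r set \<Rightarrow> 'c set \<Rightarrow> nat" where
  "rank_mod p M R C = Max {card J | J. J \<subseteq> C \<and> finite J \<and> indep_mod p M R J}"

text \<open>Construction A lattice  B (gamma^-1 g({G_i w : w in F_gamma^i}) + Z^n), where G_i is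
  the first i columns (columns indexed 1..K) of G.\<close>
definition constrA :: "nat \<Rightarrow> real^'n^'n \<Rightarrow> ('n \<Rightarrow> nat \<Rightarrow> int) \<Rightarrow> nat \<Rightarrow> (real^'n) set" where
  "constrA \<gamma> B G i =
     {B *v ((1 / real \<gamma>) *\<^sub>R (\<chi> r. real_of_int ((\<Sum>j\<in>{1..i}. G r j * w j) mod int \<gamma>))
             + (\<chi> r. real_of_int (z r))) | (w :: nat \<Rightarrow> int) (z :: 'n \<Rightarrow> int). True}"

definition voronoi :: "('v set \<Rightarrow> 'v \<Rightarrow> 'v::zero) \<Rightarrow> 'v set \<Rightarrow> 'v set" where
  "voronoi Q \<Lambda> = {x. Q \<Lambda> x = 0}"

definition modl :: "('v set \<Rightarrow> 'v \<Rightarrow> 'v::minus) \<Rightarrow> 'v set \<Rightarrow> 'v \<Rightarrow> 'v" where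
  "modl Q \<Lambda> x = x - Q \<Lambda> x"

text \<open>Nearest-point quantizer for a lattice with a fixed (translation-consistent) tie rule.\<close>
definition nearest_quantizer :: "(real^'n) set \<Rightarrow> (real^'n \<Rightarrow> real^'n) \<Rightarrow> bool" where
  "nearest_quantizer \<Lambda> q \<longleftrightarrow>
     (\<forall>x. q x \<in> \<Lambda>) \<and> (\<forall>x. \<forall>y\<in>\<Lambda>. dist x (q x) \<le> dist x y) \<and>
     (\<forall>x. \<forall>y\<in>\<Lambda>. q (x + y) = q x + y)"

definition cond_entropy_bits :: "'a measure \<Rightarrow> ('a \<Rightarrow> 'b) \<Rightarrow> ('a \<Rightarrow> 'c) \<Rightarrow> real" where
  "cond_entropy_bits M X Y =
     - (\<Sum>(x, y) \<in> (\<lambda>\<omega>. (X \<omega>, Y \<omega>)) ` space M.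
          let pxy = measure M {\<omega> \<in> space M. X \<omega> = x \<and> Y \<omega> = y};
              py = measure M {\<omega> \<in> space M. Y \<omega> = y}
          in pxy * log 2 (pxy / py))"

end

theory Submission
  imports Defs
begin


locale LS =
  fixes \<gamma> :: nat and G :: "'n::finite \<Rightarrow> nat \<Rightarrow> int" and B :: "real^'n^'n" and K :: nat
  assumes prime: "prime \<gamma>" and invB: "invertible B" and full: "indep_mod \<gamma> G UNIV {1..K}"
begin

definition emb :: "('n \<Rightarrow> int) \<Rightarrow> real^'n" where
  "emb u = B *v ((1 / real \<gamma>) *\<^sub>R (\<chi> r. real_of_int (u r)))"
definition gen :: "nat \<Rightarrow> (nat \<Rightarrow> int) \<Rightarrow> 'n \<Rightarrow> int" where
  "gen a w = (\<lambda>r. \<Sum>j\<in>{1..a}. G r j * w j)"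
definition Lint :: "nat \<Rightarrow> ('n \<Rightarrow> int) set" where
  "Lint a = {u. \<exists>w. \<forall>r. int \<gamma> dvd (u r - gen a w r)}"

lemma gpos: "\<gamma> > 0" using prime prime_gt_0_nat by blast
lemma g1: "\<gamma> > 1" using prime prime_gt_1_nat by blast

lemma chi_add: "(\<chi> r. real_of_int (u r + v r)) = (\<chi> r. real_of_int (u r)) + (\<chi> r. real_of_int (v r))"
  by (simp add: vec_eq_iff)
lemma chi_diff: "(\<chi> r. real_of_int (u r - v r)) = (\<chi> r. real_of_int (u r)) - (\<chi> r. real_of_int (v r))"
  by (simp add: vec_eq_iff)
lemma chi_scal: "(\<chi> r. real_of_int (c * u r)) = of_int c *\<^sub>R (\<chi> r. real_of_int (u r))"
  by (simp add: vec_eq_iff)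
lemma emb_add: "emb (\<lambda>r. u r + v r) = emb u + emb v"
  unfolding emb_def chi_add by (simp only: scaleR_add_right matrix_vector_right_distrib)
lemma emb_diff: "emb (\<lambda>r. u r - v r) = emb u - emb v"
  unfolding emb_def chi_diff by (simp only: scaleR_diff_right matrix_vector_mult_diff_distrib)
lemma emb_scal: "emb (\<lambda>r. c * u r) = of_int c *\<^sub>R emb u"
  unfolding emb_def chi_scal by (simp only: matrix_vector_mult_scaleR scaleR_scaleR mult.commute)
lemma emb_zero: "emb (\<lambda>r. 0) = 0"
  unfolding emb_def by (simp add: vec_eq_iff matrix_vector_mult_def)
lemma emb_sum: "finite A \<Longrightarrow> emb (\<lambda>r. \<Sum>l\<in>A. f l r) = (\<Sum>l\<in>A. emb (f l))"
  by (induction A rule: finite_induct) (simp_all add: emb_zero emb_add)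

lemma emb_inj: assumes "emb u = emb v" shows "u = v"
proof -
  obtain Bi where Bi: "Bi ** B = mat 1" using invB invertible_left_inverse by blast
  have "Bi *v (B *v ((1 / real \<gamma>) *\<^sub>R (\<chi> r. real_of_int (u r)))) = Bi *v (B *v ((1 / real \<gamma>) *\<^sub>R (\<chi> r. real_of_int (v r))))"
    using assms unfolding emb_def by simp
  hence "(1 / real \<gamma>) *\<^sub>R (\<chi> r. real_of_int (u r)) = (1 / real \<gamma>) *\<^sub>R (\<chi> r. real_of_int (v r))"
    by (simp add: matrix_vector_mul_assoc Bi)
  hence "(\<chi> r. real_of_int (u r)) = (\<chi> r. real_of_int (v r))" using gpos by simp
  thus ?thesis by (simp add: vec_eq_iff fun_eq_iff)
qed

lemma gen_add: "gen a (\<lambda>j. w j + w' j) r = gen a w r + gen a w' r"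
  unfolding gen_def by (simp add: sum.distrib algebra_simps)
lemma gen_diff: "gen a (\<lambda>j. w j - w' j) r = gen a w r - gen a w' r"
  unfolding gen_def by (simp add: sum_subtractf algebra_simps)
lemma gen_scal: "gen a (\<lambda>j. c * w j) r = c * gen a w r"
  unfolding gen_def by (simp add: sum_distrib_left algebra_simps)
lemma gen_sum: "gen a (\<lambda>j. \<Sum>l\<in>A. f l j) r = (\<Sum>l\<in>A. gen a (f l) r)"
  unfolding gen_def by (simp add: sum_distrib_left) (rule sum.swap)
lemma gen_dvd: "(\<And>j. j \<in> {1..a} \<Longrightarrow> int \<gamma> dvd w j) \<Longrightarrow> int \<gamma> dvd gen a w r"
  unfolding gen_def by (auto intro!: dvd_sum)

lemma gen_split: "a \<le> b \<Longrightarrow> gen b w r = gen a w r + (\<Sum>j\<in>{a<..b}. G r j * w j)"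
proof -
  assume "a \<le> b"
  hence "{1..b} = {1..a} \<union> {a<..b}" by auto
  thus ?thesis unfolding gen_def by (simp only:) (rule sum.union_disjoint; auto)
qed

lemma gen_ext: "a \<le> b \<Longrightarrow> (\<And>j. j > a \<Longrightarrow> w j = 0) \<Longrightarrow> gen b w = gen a w"
  by (rule ext, subst gen_split[of a b], auto)

lemma gen_cong: "(\<And>j. j \<in> {1..a} \<Longrightarrow> w j = w' j) \<Longrightarrow> gen a w = gen a w'"
  unfolding gen_def by (auto intro!: sum.cong ext)

lemma full_coef:
  assumes "\<And>r. int \<gamma> dvd gen K c r" and "j \<in> {1..K}" shows "int \<gamma> dvd c j"
proof -
  have "\<forall>r\<in>UNIV. (\<Sum>j\<in>{1..K}. c j * G r j) mod int \<gamma> = 0"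
    using assms(1) unfolding gen_def by (simp add: mult.commute dvd_eq_mod_eq_0)
  hence "\<forall>j\<in>{1..K}. c j mod int \<gamma> = 0" using full unfolding indep_mod_def by blast
  thus ?thesis using assms(2) by (simp add: dvd_eq_mod_eq_0)
qed

lemma gen_0: "gen a (\<lambda>_. 0) = (\<lambda>r. 0)" by (simp add: gen_def)
lemma Lint_dvd: "(\<And>r. int \<gamma> dvd u r) \<Longrightarrow> u \<in> Lint a"
  unfolding Lint_def by (auto intro!: exI[of _ "\<lambda>_. 0"] simp: gen_0)
lemma Lint_0: "(\<lambda>r. 0) \<in> Lint a"
  by (rule Lint_dvd) simp
lemma Lint_add: "u \<in> Lint a \<Longrightarrow> v \<in> Lint a \<Longrightarrow> (\<lambda>r. u r + v r) \<in> Lint a"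
proof -
  assume "u \<in> Lint a" "v \<in> Lint a"
  then obtain w w' where w: "\<forall>r. int \<gamma> dvd (u r - gen a w r)" and w': "\<forall>r. int \<gamma> dvd (v r - gen a w' r)"
    unfolding Lint_def by blast
  have "int \<gamma> dvd ((u r + v r) - gen a (\<lambda>j. w j + w' j) r)" for r
  proof -
    have eq: "(u r + v r) - gen a (\<lambda>j. w j + w' j) r = (u r - gen a w r) + (v r - gen a w' r)"
      by (simp add: gen_add)
    show ?thesis unfolding eq by (rule dvd_add[OF spec[OF w] spec[OF w']])
  qed
  thus ?thesis unfolding Lint_def by blast
qed
lemma Lint_scal: "u \<in> Lint a \<Longrightarrow> (\<lambda>r. c * u r) \<in> Lint a"
proof -
  assume "u \<in> Lint a"
  then obtain w where w: "\<forall>r. int \<gamma> dvd (u r - gen a w r)" unfolding Lint_def by blast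
  have "int \<gamma> dvd ((c * u r) - gen a (\<lambda>j. c * w j) r)" for r
  proof -
    have eq: "(c * u r) - gen a (\<lambda>j. c * w j) r = c * (u r - gen a w r)"
      by (simp add: gen_scal right_diff_distrib)
    show ?thesis unfolding eq by (rule dvd_mult[OF spec[OF w]])
  qed
  thus ?thesis unfolding Lint_def by blast
qed
lemma Lint_diff: "u \<in> Lint a \<Longrightarrow> v \<in> Lint a \<Longrightarrow> (\<lambda>r. u r - v r) \<in> Lint a"
  using Lint_add[of u a "\<lambda>r. (-1) * v r"] Lint_scal[of v a "-1"] by simp
lemma Lint_gen: "gen a w \<in> Lint a"
  unfolding Lint_def by (rule CollectI, rule exI[of _ w]) simp
lemma Lint_mono: assumes "a \<le> b" shows "Lint a \<subseteq> Lint b"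
proof
  fix u assume "u \<in> Lint a"
  then obtain w where w: "\<forall>r. int \<gamma> dvd (u r - gen a w r)" unfolding Lint_def by blast
  have "gen b (\<lambda>j. if j \<le> a then w j else 0) = gen a (\<lambda>j. if j \<le> a then w j else 0)"
    using assms by (intro gen_ext) auto
  also have "\<dots> = gen a w" by (rule gen_cong) auto
  finally have eq: "gen b (\<lambda>j. if j \<le> a then w j else 0) = gen a w" .
  show "u \<in> Lint b" unfolding Lint_def using w
    by (intro CollectI exI[of _ "\<lambda>j. if j \<le> a then w j else 0"]) (simp add: eq)
qed
lemma Lint_cong: assumes "u \<in> Lint a" "\<And>r. int \<gamma> dvd (v r - u r)" shows "v \<in> Lint a"
proof -
  obtain w where w: "\<forall>r. int \<gamma> dvd (u r - gen a w r)" using assms(1) unfolding Lint_def by blast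
  have "int \<gamma> dvd (v r - gen a w r)" for r
  proof -
    have eq: "v r - gen a w r = (v r - u r) + (u r - gen a w r)" by simp
    show ?thesis unfolding eq by (rule dvd_add[OF assms(2) spec[OF w]])
  qed
  thus ?thesis unfolding Lint_def by blast
qed

lemma vec_helper: "(1/real \<gamma>) *\<^sub>R (\<chi> r. real_of_int (m r)) + (\<chi> r. real_of_int (z r)) = (1/real \<gamma>) *\<^sub>R (\<chi> r. real_of_int (m r + int \<gamma> * z r))"
  using gpos by (simp add: vec_eq_iff field_simps)

lemma lat_eq: "constrA \<gamma> B G a = emb ` Lint a"
proof (rule set_eqI, rule iffI)
  fix x assume "x \<in> constrA \<gamma> B G a"
  then obtain w z where x: "x = B *v ((1 / real \<gamma>) *\<^sub>R (\<chi> r. real_of_int ((\<Sum>j\<in>{1..a}. G r j * w j) mod int \<gamma>))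
             + (\<chi> r. real_of_int (z r)))" unfolding constrA_def by blast
  let ?u = "\<lambda>r. (gen a w r) mod int \<gamma> + int \<gamma> * z r"
  have "x = emb ?u" unfolding x emb_def gen_def by (simp only: vec_helper)
  moreover have "?u \<in> Lint a" unfolding Lint_def
    by (rule CollectI, rule exI[of _ w]) (simp add: mod_eq_dvd_iff[symmetric] mod_diff_left_eq[symmetric])
  ultimately show "x \<in> emb ` Lint a" by blast
next
  fix x assume "x \<in> emb ` Lint a"
  then obtain u w where x: "x = emb u" and w: "\<forall>r. int \<gamma> dvd (u r - gen a w r)"
    unfolding Lint_def by blast
  define z where "z = (\<lambda>r. (u r - gen a w r mod int \<gamma>) div int \<gamma>)"
  have zz: "u r = gen a w r mod int \<gamma> + int \<gamma> * z r" for r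
  proof -
    have "int \<gamma> dvd (u r - gen a w r mod int \<gamma>)"
      using w by (metis mod_diff_right_eq mod_eq_0_iff_dvd)
    thus ?thesis unfolding z_def by simp
  qed
  hence "u = (\<lambda>r. gen a w r mod int \<gamma> + int \<gamma> * z r)" by auto
  hence "x = B *v ((1 / real \<gamma>) *\<^sub>R (\<chi> r. real_of_int ((\<Sum>j\<in>{1..a}. G r j * w j) mod int \<gamma>))
             + (\<chi> r. real_of_int (z r)))"
    unfolding x emb_def gen_def by (simp only: vec_helper)
  thus "x \<in> constrA \<gamma> B G a" unfolding constrA_def by blast
qed

end


context LS begin

abbreviation lat where "lat a \<equiv> constrA \<gamma> B G a"

lemma mem_lat: "x \<in> lat a \<longleftrightarrow> (\<exists>u\<in>Lint a. x = emb u)"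
  unfolding lat_eq by blast

lemma gen_ext0: "a \<le> K \<Longrightarrow> gen a w = gen K (\<lambda>j. if j \<le> a then w j else 0)"
proof -
  assume "a \<le> K"
  hence "gen K (\<lambda>j. if j \<le> a then w j else 0) = gen a (\<lambda>j. if j \<le> a then w j else 0)"
    by (intro gen_ext) auto
  also have "\<dots> = gen a w" by (rule gen_cong) auto
  finally show ?thesis by simp
qed

lemma lat_gen_iff: assumes "a \<le> K"
  shows "emb (gen K c) \<in> lat a \<longleftrightarrow> (\<forall>j\<in>{a<..K}. int \<gamma> dvd c j)"
proof
  assume "emb (gen K c) \<in> lat a"
  then obtain u where u: "u \<in> Lint a" "emb (gen K c) = emb u" unfolding mem_lat by blast
  hence "gen K c \<in> Lint a" using emb_inj by metis
  then obtain w where w: "\<forall>r. int \<gamma> dvd (gen K c r - gen a w r)" unfolding Lint_def by blast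
  define w' where "w' = (\<lambda>j. if j \<le> a then w j else (0::int))"
  have "gen a w = gen K w'" unfolding w'_def using gen_ext0[OF assms] .
  hence "\<forall>r. int \<gamma> dvd gen K (\<lambda>j. c j - w' j) r" using w by (simp add: gen_diff)
  hence "\<forall>j\<in>{1..K}. int \<gamma> dvd (c j - w' j)" using full_coef by blast
  show "\<forall>j\<in>{a<..K}. int \<gamma> dvd c j"
  proof
    fix j assume j: "j \<in> {a<..K}"
    hence j1: "j \<in> {1..K}" and ja: "\<not> j \<le> a" by auto
    have "int \<gamma> dvd (c j - w' j)" using \<open>\<forall>j\<in>{1..K}. int \<gamma> dvd (c j - w' j)\<close> j1 by blast
    thus "int \<gamma> dvd c j" using ja unfolding w'_def by simp
  qed
next
  assume H: "\<forall>j\<in>{a<..K}. int \<gamma> dvd c j"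
  have "int \<gamma> dvd (gen K c r - gen a c r)" for r
    using gen_split[OF assms, of c r] H by (auto intro!: dvd_sum)
  hence "gen K c \<in> Lint a" unfolding Lint_def by blast
  thus "emb (gen K c) \<in> lat a" unfolding mem_lat by blast
qed

lemma lat_mono: "a \<le> b \<Longrightarrow> lat a \<subseteq> lat b"
  unfolding lat_eq using Lint_mono by blast

lemma lat_add: "x \<in> lat a \<Longrightarrow> y \<in> lat a \<Longrightarrow> x + y \<in> lat a"
  unfolding mem_lat by (metis Lint_add emb_add)
lemma lat_diff: "x \<in> lat a \<Longrightarrow> y \<in> lat a \<Longrightarrow> x - y \<in> lat a"
  unfolding mem_lat by (metis Lint_diff emb_diff)
lemma lat_scal: "x \<in> lat a \<Longrightarrow> of_int c *\<^sub>R x \<in> lat a"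
  unfolding mem_lat by (metis Lint_scal emb_scal)
lemma lat_zero: "0 \<in> lat a"
  unfolding mem_lat by (metis Lint_0 emb_zero)
lemma lat_uminus: "x \<in> lat a \<Longrightarrow> - x \<in> lat a"
  using lat_diff[OF lat_zero] by fastforce
lemma lat_sum: "finite A \<Longrightarrow> (\<And>l. l \<in> A \<Longrightarrow> f l \<in> lat a) \<Longrightarrow> (\<Sum>l\<in>A. f l) \<in> lat a"
  by (induction A rule: finite_induct) (auto intro: lat_add lat_zero)

lemma lat_strict: assumes "a < b" "b \<le> K" shows "\<not> lat b \<subseteq> lat a"
proof
  assume sub: "lat b \<subseteq> lat a"
  define c where "c = (\<lambda>j. if j = b then (1::int) else 0)"
  have "emb (gen K c) \<in> lat b" using assms by (subst lat_gen_iff) (auto simp: c_def)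
  hence "emb (gen K c) \<in> lat a" using sub by blast
  hence "int \<gamma> dvd c b" using assms by (subst (asm) lat_gen_iff) auto
  thus False using g1 by (simp add: c_def)
qed

lemma lat_subset_iff: "a \<le> K \<Longrightarrow> b \<le> K \<Longrightarrow> lat a \<subseteq> lat b \<longleftrightarrow> a \<le> b"
  using lat_mono lat_strict by (meson not_le)

context
  fixes a :: nat and Q :: "(real^'n) set \<Rightarrow> real^'n \<Rightarrow> real^'n"
  assumes NQ: "nearest_quantizer (lat a) (Q (lat a))"
begin

lemma q_in: "Q (lat a) x \<in> lat a" using NQ unfolding nearest_quantizer_def by blast
lemma q_trans: "y \<in> lat a \<Longrightarrow> Q (lat a) (x + y) = Q (lat a) x + y"
  using NQ unfolding nearest_quantizer_def by blast
lemma q_near: "y \<in> lat a \<Longrightarrow> dist x (Q (lat a) x) \<le> dist x y"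
  using NQ unfolding nearest_quantizer_def by blast

lemma modl_in_vor: "modl Q (lat a) x \<in> voronoi Q (lat a)"
proof -
  have "Q (lat a) (x + - Q (lat a) x) = Q (lat a) x + - Q (lat a) x"
    by (rule q_trans[OF lat_uminus[OF q_in]])
  thus ?thesis unfolding modl_def voronoi_def by simp
qed

lemma modl_shift: "y \<in> lat a \<Longrightarrow> modl Q (lat a) (x + y) = modl Q (lat a) x"
  unfolding modl_def by (simp add: q_trans)

lemma modl_shift_diff: "y \<in> lat a \<Longrightarrow> modl Q (lat a) (x - y) = modl Q (lat a) x"
  using modl_shift[OF lat_uminus, of y x] by simp

lemma modl_vor: "x \<in> voronoi Q (lat a) \<Longrightarrow> modl Q (lat a) x = x"
  unfolding modl_def voronoi_def by simp

lemma modl_diff_in: "x - modl Q (lat a) x \<in> lat a"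
  unfolding modl_def using q_in by simp

lemma q_zero: "Q (lat a) 0 = 0"
  using q_near[OF lat_zero, of 0] by simp

lemma zero_vor: "0 \<in> voronoi Q (lat a)"
  unfolding voronoi_def using q_zero by simp

end

definition Dset :: "nat \<Rightarrow> nat \<Rightarrow> (nat \<Rightarrow> int) set" where
  "Dset a b = {d. \<forall>j. (j \<in> {a<..b} \<longrightarrow> 0 \<le> d j \<and> d j < int \<gamma>) \<and> (j \<notin> {a<..b} \<longrightarrow> d j = 0)}"

lemma Dset_zero: "(\<lambda>_. 0) \<in> Dset a b"
  unfolding Dset_def using gpos by auto

lemma card_Dset: "card (Dset a b) = \<gamma> ^ (b - a)" and finite_Dset: "finite (Dset a b)"
proof -
  have inj: "inj_on (\<lambda>d. restrict d {a<..b}) (Dset a b)"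
  proof (rule inj_onI)
    fix d d' assume "d \<in> Dset a b" "d' \<in> Dset a b" "restrict d {a<..b} = restrict d' {a<..b}"
    thus "d = d'" unfolding Dset_def by (auto simp: fun_eq_iff restrict_def split: if_splits) metis
  qed
  have im: "(\<lambda>d. restrict d {a<..b}) ` Dset a b = PiE {a<..b} (\<lambda>_. {0..<int \<gamma>})"
  proof (rule set_eqI, rule iffI)
    fix e assume "e \<in> (\<lambda>d. restrict d {a<..b}) ` Dset a b"
    thus "e \<in> PiE {a<..b} (\<lambda>_. {0..<int \<gamma>})" unfolding Dset_def by auto
  next
    fix e assume e: "e \<in> PiE {a<..b} (\<lambda>_. {0..<int \<gamma>})"
    define d where "d = (\<lambda>j. if j \<in> {a<..b} then e j else 0)"
    have "d \<in> Dset a b" using e unfolding d_def Dset_def by auto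
    moreover have "restrict d {a<..b} = e" using e unfolding d_def
      by (auto simp: fun_eq_iff restrict_def PiE_def extensional_def)
    ultimately show "e \<in> (\<lambda>d. restrict d {a<..b}) ` Dset a b" by blast
  qed
  have "card (Dset a b) = card (PiE {a<..b} (\<lambda>_. {0..<int \<gamma>}))"
    using card_image[OF inj] im by simp
  also have "\<dots> = \<gamma> ^ (b - a)" by (simp add: card_PiE)
  finally show "card (Dset a b) = \<gamma> ^ (b - a)" .
  have "finite (PiE {a<..b} (\<lambda>_. {0..<int \<gamma>}))" by (simp add: finite_PiE)
  thus "finite (Dset a b)" using inj im finite_imageD by metis
qed

lemma dvd_small_eq: "0 \<le> x \<Longrightarrow> x < g \<Longrightarrow> 0 \<le> y \<Longrightarrow> y < g \<Longrightarrow> g dvd (x - y) \<Longrightarrow> x = (y::int)"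
  by (metis dvd_imp_mod_0 mod_pos_pos_trivial mod_eq_dvd_iff)

definition repm :: "((real^'n) set \<Rightarrow> real^'n \<Rightarrow> real^'n) \<Rightarrow> nat \<Rightarrow> (nat \<Rightarrow> int) \<Rightarrow> real^'n" where
  "repm Q a d = modl Q (lat a) (emb (gen K d))"

context
  fixes a b :: nat and Q :: "(real^'n) set \<Rightarrow> real^'n \<Rightarrow> real^'n"
  assumes NQ: "nearest_quantizer (lat a) (Q (lat a))" and ab: "a \<le> b" and bK: "b \<le> K"
begin

lemma emb_gen_Dset: "d \<in> Dset a b \<Longrightarrow> emb (gen K d) \<in> lat b"
  using bK by (subst lat_gen_iff) (auto simp: Dset_def)

lemma rep_in: "d \<in> Dset a b \<Longrightarrow> repm Q a d \<in> lat b \<inter> voronoi Q (lat a)"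
proof -
  assume d: "d \<in> Dset a b"
  have "emb (gen K d) - Q (lat a) (emb (gen K d)) \<in> lat b"
    using emb_gen_Dset[OF d] q_in[of a Q, OF NQ] lat_mono[OF ab] lat_diff by blast
  thus ?thesis unfolding repm_def using modl_in_vor[of a Q, OF NQ] by (simp add: modl_def)
qed

lemma rep_inj: "inj_on (repm Q a) (Dset a b)"
proof (rule inj_onI)
  fix d d' assume d: "d \<in> Dset a b" and d': "d' \<in> Dset a b" and eq: "repm Q a d = repm Q a d'"
  have "emb (gen K d) - emb (gen K d') = Q (lat a) (emb (gen K d)) - Q (lat a) (emb (gen K d'))"
    using eq unfolding repm_def modl_def by (simp add: algebra_simps)
  also have "\<dots> \<in> lat a" using q_in[of a Q, OF NQ] lat_diff by blast
  finally have "emb (\<lambda>r. gen K d r - gen K d' r) \<in> lat a"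
    by (simp add: emb_diff[symmetric])
  moreover have "gen K (\<lambda>j. d j - d' j) = (\<lambda>r. gen K d r - gen K d' r)" by (rule ext, rule gen_diff)
  ultimately have "emb (gen K (\<lambda>j. d j - d' j)) \<in> lat a" by simp
  hence H: "\<forall>j\<in>{a<..K}. int \<gamma> dvd (d j - d' j)" using ab bK by (subst (asm) lat_gen_iff) auto
  show "d = d'"
  proof
    fix j show "d j = d' j"
    proof (cases "j \<in> {a<..b}")
      case True
      thus ?thesis using d d' H bK by (intro dvd_small_eq[of _ "int \<gamma>"]) (auto simp: Dset_def)
    next
      case False
      thus ?thesis using d d' by (auto simp: Dset_def)
    qed
  qed
qed

lemma rep_image: "lat b \<inter> voronoi Q (lat a) = repm Q a ` Dset a b"
proof
  show "repm Q a ` Dset a b \<subseteq> lat b \<inter> voronoi Q (lat a)" using rep_in by blast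
next
  show "lat b \<inter> voronoi Q (lat a) \<subseteq> repm Q a ` Dset a b"
  proof
    fix x assume x: "x \<in> lat b \<inter> voronoi Q (lat a)"
    from IntD1[OF x] obtain u where u: "u \<in> Lint b" "x = emb u" unfolding mem_lat by blast
    then obtain w where w: "\<forall>r. int \<gamma> dvd (u r - gen b w r)" unfolding Lint_def by blast
    define d where "d = (\<lambda>j. if j \<in> {a<..b} then w j mod int \<gamma> else 0)"
    have dD: "d \<in> Dset a b" unfolding d_def Dset_def using gpos by auto
    have gd: "gen K d r = (\<Sum>j\<in>{a<..b}. G r j * d j)" for r
    proof -
      have "gen K d = gen b d" using ab bK by (intro gen_ext) (auto simp: d_def)
      moreover have "gen a d r = 0" unfolding gen_def d_def by (auto intro!: sum.neutral)
      ultimately show ?thesis using gen_split[OF ab, of d r] by simp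
    qed
    have "int \<gamma> dvd ((u r - gen K d r) - gen a w r)" for r
    proof -
      have eq: "(u r - gen K d r) - gen a w r = (u r - gen b w r) + (\<Sum>j\<in>{a<..b}. G r j * (w j - d j))"
        using gen_split[OF ab, of w r] by (simp add: gd sum_subtractf algebra_simps)
      have "int \<gamma> dvd (\<Sum>j\<in>{a<..b}. G r j * (w j - d j))"
        by (auto intro!: dvd_sum dvd_mult simp: d_def mod_eq_dvd_iff[symmetric])
      thus ?thesis unfolding eq by (rule dvd_add[OF spec[OF w]])
    qed
    hence "(\<lambda>r. u r - gen K d r) \<in> Lint a" by (intro Lint_cong[OF Lint_gen]) auto
    hence y: "x - emb (gen K d) \<in> lat a" unfolding mem_lat u(2) by (metis emb_diff)
    have "repm Q a d = modl Q (lat a) (x - (x - emb (gen K d)))" unfolding repm_def by simp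
    also have "\<dots> = modl Q (lat a) x" by (rule modl_shift_diff[of a Q, OF NQ y])
    also have "\<dots> = x" using x modl_vor[of a Q, OF NQ] by blast
    finally show "x \<in> repm Q a ` Dset a b" using dD by (metis image_eqI)
  qed
qed

lemma card_lat_vor: "card (lat b \<inter> voronoi Q (lat a)) = \<gamma> ^ (b - a)"
  using rep_image card_image[OF rep_inj] card_Dset by simp

lemma finite_lat_vor: "finite (lat b \<inter> voronoi Q (lat a))"
  using rep_image finite_Dset by simp

end
end


context LS begin

lemma countable_lat: "countable (lat a)"
proof -
  have "countable (UNIV :: ('n \<Rightarrow> int) set)" by simp
  hence "countable (Lint a)" using countable_subset by blast
  thus ?thesis unfolding lat_eq by simp
qed

lemma emb_gamma: "emb (\<lambda>r. int \<gamma> * z r) = B *v (\<chi> r. real_of_int (z r))"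
proof -
  have "(1/real \<gamma>) *\<^sub>R (\<chi> r. real_of_int (int \<gamma> * z r)) = (\<chi> r. real_of_int (z r))"
    using gpos by (simp add: vec_eq_iff)
  thus ?thesis unfolding emb_def by simp
qed

lemma Z_in_lat: "B *v (\<chi> r. real_of_int (z r)) \<in> lat a"
  unfolding mem_lat by (metis emb_gamma Lint_dvd dvd_triv_left)

lemma hyper: "norm (x::real^'n) = norm (x - y) \<Longrightarrow> (2 *\<^sub>R y) \<bullet> x = y \<bullet> y"
proof -
  assume "norm x = norm (x - y)"
  hence "norm x ^ 2 = norm (x - y) ^ 2" by simp
  hence "x \<bullet> x = (x - y) \<bullet> (x - y)" by (simp add: power2_norm_eq_inner)
  thus ?thesis by (simp add: inner_diff_left inner_diff_right inner_commute algebra_simps)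
qed

context
  fixes a :: nat and Q :: "(real^'n) set \<Rightarrow> real^'n \<Rightarrow> real^'n"
  assumes NQ: "nearest_quantizer (lat a) (Q (lat a))"
begin

abbreviation "V \<equiv> voronoi Q (lat a)"

lemma V_sets: "V \<in> sets lebesgue"
proof -
  define Vc where "Vc = {x. \<forall>y\<in>lat a. norm x \<le> norm (x - y)}"
  have Vc_closed: "closed Vc"
  proof -
    have "Vc = (\<Inter>y\<in>lat a. {x. norm x \<le> norm (x - y)})" unfolding Vc_def by auto
    moreover have "closed {x. norm x \<le> norm (x - y)}" for y :: "real^'n"
      by (intro closed_Collect_le continuous_intros)
    ultimately show ?thesis by auto
  qed
  have Vc_sets: "Vc \<in> sets lebesgue"
    using lebesgue_closedin[of UNIV Vc] Vc_closed by simp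
  have sub: "V \<subseteq> Vc"
  proof
    fix x assume "x \<in> V"
    hence q0: "Q (lat a) x = 0" unfolding voronoi_def by simp
    show "x \<in> Vc" unfolding Vc_def
    proof (rule CollectI, rule ballI)
      fix y assume "y \<in> lat a"
      hence "dist x (Q (lat a) x) \<le> dist x y" by (rule q_near[of a Q, OF NQ])
      thus "norm x \<le> norm (x - y)" by (simp only: q0 dist_norm diff_zero)
    qed
  qed
  have diff: "Vc - V \<subseteq> (\<Union>y\<in>lat a - {0}. {x. (2 *\<^sub>R y) \<bullet> x = y \<bullet> y})"
  proof
    fix x assume x: "x \<in> Vc - V"
    let ?y = "Q (lat a) x"
    have y: "?y \<in> lat a" by (rule q_in[of a Q, OF NQ])
    have yn: "?y \<noteq> 0" using x unfolding voronoi_def by simp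
    have "dist x ?y \<le> dist x 0" by (rule q_near[of a Q, OF NQ lat_zero])
    moreover have "norm x \<le> norm (x - ?y)" using x y unfolding Vc_def by blast
    ultimately have "norm x = norm (x - ?y)" by (simp add: dist_norm)
    hence "(2 *\<^sub>R ?y) \<bullet> x = ?y \<bullet> ?y" by (rule hyper)
    thus "x \<in> (\<Union>y\<in>lat a - {0}. {x. (2 *\<^sub>R y) \<bullet> x = y \<bullet> y})" using y yn by blast
  qed
  have "negligible (\<Union>y\<in>lat a - {0}. {x. (2 *\<^sub>R y) \<bullet> x = y \<bullet> y})"
  proof (rule negligible_countable_Union)
    show "countable ((\<lambda>y. {x. (2 *\<^sub>R y) \<bullet> x = y \<bullet> y}) ` (lat a - {0}))"
      using countable_lat by simp
  next
    fix S assume "S \<in> (\<lambda>y. {x. (2 *\<^sub>R y) \<bullet> x = y \<bullet> y}) ` (lat a - {0})"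
    then obtain y where yn: "y \<noteq> 0" and S: "S = {x. (2 *\<^sub>R y) \<bullet> x = y \<bullet> y}" by blast
    show "negligible S" unfolding S by (rule negligible_hyperplane) (use yn in simp)
  qed
  hence "negligible (Vc - V)" using diff negligible_subset by blast
  hence "Vc - V \<in> sets lebesgue" by (rule negligible_imp_sets)
  hence "Vc - (Vc - V) \<in> sets lebesgue" using Vc_sets by blast
  moreover have "Vc - (Vc - V) = V" using sub by blast
  ultimately show ?thesis by simp
qed

lemma V_bounded: "bounded V"
proof -
  obtain Bi where Bi: "B ** Bi = mat 1" using invB invertible_right_inverse by blast
  obtain K0 where K0: "\<And>w. norm (B *v w) \<le> norm w * K0"
    using bounded_linear.bounded[OF matrix_vector_mul_bounded_linear[of B]] by blast
  show ?thesis unfolding bounded_iff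
  proof (intro exI ballI)
    fix x assume x: "x \<in> V"
    define u where "u = Bi *v x"
    define w where "w = u - (\<chi> r. real_of_int (floor (u $ r)))"
    have xu: "x = B *v u" unfolding u_def by (simp add: matrix_vector_mul_assoc Bi)
    have y: "B *v (\<chi> r. real_of_int (floor (u $ r))) \<in> lat a" by (rule Z_in_lat)
    have nw: "norm w \<le> real CARD('n)"
    proof -
      have "norm w \<le> (\<Sum>i\<in>UNIV. \<bar>w $ i\<bar>)" by (rule norm_le_l1_cart)
      also have "\<dots> \<le> (\<Sum>i\<in>(UNIV::'n set). 1)"
      proof (rule sum_mono)
        fix i
        have "0 \<le> w $ i" using floor_correct[of "u $ i"] unfolding w_def by simp
        moreover have "w $ i < 1" using floor_correct[of "u $ i"] unfolding w_def by (simp; linarith)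
        ultimately show "\<bar>w $ i\<bar> \<le> 1" by simp
      qed
      finally show ?thesis by simp
    qed
    have "dist x (Q (lat a) x) \<le> dist x (B *v (\<chi> r. real_of_int (floor (u $ r))))"
      by (rule q_near[of a Q, OF NQ y])
    hence "norm x \<le> norm (x - B *v (\<chi> r. real_of_int (floor (u $ r))))"
      using x unfolding voronoi_def by (simp add: dist_norm)
    also have "x - B *v (\<chi> r. real_of_int (floor (u $ r))) = B *v w"
      unfolding xu w_def by (simp add: matrix_vector_mult_diff_distrib)
    also have "norm (B *v w) \<le> norm w * K0" by (rule K0)
    also have "norm w * K0 \<le> norm w * \<bar>K0\<bar>" by (rule mult_left_mono) simp_all
    also have "\<dots> \<le> real CARD('n) * \<bar>K0\<bar>" by (rule mult_right_mono[OF nw]) simp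
    finally show "norm x \<le> real CARD('n) * \<bar>K0\<bar>" .
  qed
qed

lemma V_finite: "emeasure lebesgue V < \<infinity>"
proof -
  have "V \<in> fmeasurable lebesgue" by (rule bounded_set_imp_lmeasurable[OF V_bounded V_sets])
  thus ?thesis unfolding fmeasurable_def by blast
qed

lemma V_pos: "emeasure lebesgue V \<noteq> 0"
proof
  assume "emeasure lebesgue V = 0"
  hence neg: "negligible V" using negligible_iff_emeasure0[OF V_sets] by simp
  have "negligible (\<Union>y\<in>lat a. (+) y ` V)"
  proof (rule negligible_countable_Union)
    show "countable ((\<lambda>y. (+) y ` V) ` lat a)" using countable_lat by simp
  next
    fix S assume "S \<in> (\<lambda>y. (+) y ` V) ` lat a"
    thus "negligible S" using negligible_translation[OF neg] by blast
  qed
  moreover have "(\<Union>y\<in>lat a. (+) y ` V) = UNIV"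
  proof -
    have "x \<in> (+) (Q (lat a) x) ` V" for x
    proof
      show "x = Q (lat a) x + modl Q (lat a) x" unfolding modl_def by simp
      show "modl Q (lat a) x \<in> V" by (rule modl_in_vor[of a Q, OF NQ])
    qed
    thus ?thesis using q_in[of a Q, OF NQ] by blast
  qed
  ultimately show False by simp
qed

lemma W_props: assumes b: "\<beta> > 0"
  shows "(\<lambda>x. (1 / \<beta>) *\<^sub>R x) ` V \<in> sets lebesgue"
    and "emeasure lebesgue ((\<lambda>x. (1 / \<beta>) *\<^sub>R x) ` V) \<noteq> 0"
    and "emeasure lebesgue ((\<lambda>x. (1 / \<beta>) *\<^sub>R x) ` V) \<noteq> \<infinity>"
proof -
  have eq: "(\<lambda>x. (1 / \<beta>) *\<^sub>R x) ` V = (\<lambda>x. \<beta> *\<^sub>R x) -` V"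
  proof (rule set_eqI, rule iffI)
    fix x assume "x \<in> (\<lambda>x. (1 / \<beta>) *\<^sub>R x) ` V"
    thus "x \<in> (\<lambda>x. \<beta> *\<^sub>R x) -` V" using b by auto
  next
    fix x assume "x \<in> (\<lambda>x. \<beta> *\<^sub>R x) -` V"
    hence "\<beta> *\<^sub>R x \<in> V" by simp
    moreover have "x = (1 / \<beta>) *\<^sub>R (\<beta> *\<^sub>R x)" using b by simp
    ultimately show "x \<in> (\<lambda>x. (1 / \<beta>) *\<^sub>R x) ` V" by blast
  qed
  have "(\<lambda>x. \<beta> *\<^sub>R x) -` V \<inter> space lebesgue \<in> sets lebesgue"
    by (rule measurable_sets[OF lebesgue_measurable_scaling V_sets])
  thus "(\<lambda>x. (1 / \<beta>) *\<^sub>R x) ` V \<in> sets lebesgue" unfolding eq by simp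
  have "emeasure lebesgue ((\<lambda>x. (1 / \<beta>) *\<^sub>R x + 0) ` V) = \<bar>1 / \<beta>\<bar> ^ DIM(real^'n) * emeasure lebesgue V"
    by (rule emeasure_lebesgue_affine)
  hence em: "emeasure lebesgue ((\<lambda>x. (1 / \<beta>) *\<^sub>R x) ` V) = ennreal ((1 / \<beta>) ^ CARD('n)) * emeasure lebesgue V"
    using b by simp
  have pos: "(1 / \<beta>) ^ CARD('n) > 0" using b by simp
  show "emeasure lebesgue ((\<lambda>x. (1 / \<beta>) *\<^sub>R x) ` V) \<noteq> 0"
    unfolding em using pos V_pos b by simp
  show "emeasure lebesgue ((\<lambda>x. (1 / \<beta>) *\<^sub>R x) ` V) \<noteq> \<infinity>"
    unfolding em using V_finite by (simp add: ennreal_mult_eq_top_iff)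
qed

end
end


definition spn :: "nat \<Rightarrow> ('r \<Rightarrow> 'c \<Rightarrow> int) \<Rightarrow> 'r set \<Rightarrow> 'c set \<Rightarrow> ('r \<Rightarrow> int) set" where
  "spn p M R J = {restrict (\<lambda>m. (\<Sum>l\<in>J. c l * M m l) mod int p) R | c. True}"

lemma dvd_small_eq': "0 \<le> x \<Longrightarrow> x < g \<Longrightarrow> 0 \<le> y \<Longrightarrow> y < g \<Longrightarrow> g dvd (x - y) \<Longrightarrow> x = (y::int)"
  by (metis dvd_imp_mod_0 mod_pos_pos_trivial mod_eq_dvd_iff)

lemma sum_mod_coef: "(\<Sum>l\<in>J. (c l mod g) * M l) mod g = (\<Sum>l\<in>J. c l * M l) mod (g::int)"
proof -
  have "(\<Sum>l\<in>J. (c l mod g) * M l) mod g = (\<Sum>l\<in>J. ((c l mod g) * M l) mod g) mod g"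
    by (simp add: mod_sum_eq)
  also have "\<dots> = (\<Sum>l\<in>J. (c l * M l) mod g) mod g" by (simp add: mod_mult_left_eq)
  also have "\<dots> = (\<Sum>l\<in>J. c l * M l) mod g" by (simp add: mod_sum_eq)
  finally show ?thesis .
qed

context
  fixes p :: nat and M :: "'r \<Rightarrow> 'c \<Rightarrow> int" and R :: "'r set"
  assumes p: "prime p"
begin

lemma ppos: "0 < int p" using p prime_gt_0_nat by simp

definition sp :: "'c set \<Rightarrow> ('c \<Rightarrow> int) \<Rightarrow> 'r \<Rightarrow> int" where
  "sp J c = restrict (\<lambda>m. (\<Sum>l\<in>J. c l * M m l) mod int p) R"

lemma spn_image: "spn p M R J = sp J ` PiE J (\<lambda>_. {0..<int p})"
proof (rule set_eqI, rule iffI)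
  fix x assume "x \<in> spn p M R J"
  then obtain c where x: "x = sp J c" unfolding spn_def sp_def by blast
  define c' where "c' = restrict (\<lambda>l. c l mod int p) J"
  have "c' \<in> PiE J (\<lambda>_. {0..<int p})" unfolding c'_def using ppos by auto
  moreover have "sp J c' = sp J c"
    unfolding sp_def c'_def using sum_mod_coef[of "\<lambda>l. c l" "int p" _ J]
    by (auto intro!: ext simp: restrict_def cong: sum.cong)
  ultimately show "x \<in> sp J ` PiE J (\<lambda>_. {0..<int p})" unfolding x by (metis image_eqI)
next
  fix x assume "x \<in> sp J ` PiE J (\<lambda>_. {0..<int p})"
  thus "x \<in> spn p M R J" unfolding spn_def sp_def by blast
qed

lemma finite_spn: "finite J \<Longrightarrow> finite (spn p M R J)"
  unfolding spn_image by (simp add: finite_PiE)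

lemma card_spn_indep: assumes J: "finite J" "indep_mod p M R J"
  shows "card (spn p M R J) = p ^ card J"
proof -
  have "inj_on (sp J) (PiE J (\<lambda>_. {0..<int p}))"
  proof (rule inj_onI)
    fix c c' assume c: "c \<in> PiE J (\<lambda>_. {0..<int p})" and c': "c' \<in> PiE J (\<lambda>_. {0..<int p})"
      and eq: "sp J c = sp J c'"
    have "\<forall>m\<in>R. (\<Sum>l\<in>J. (c l - c' l) * M m l) mod int p = 0"
    proof
      fix m assume m: "m \<in> R"
      have "(\<Sum>l\<in>J. c l * M m l) mod int p = (\<Sum>l\<in>J. c' l * M m l) mod int p"
        using fun_cong[OF eq, of m] m unfolding sp_def by simp
      hence "int p dvd ((\<Sum>l\<in>J. c l * M m l) - (\<Sum>l\<in>J. c' l * M m l))"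
        by (simp add: mod_eq_dvd_iff)
      thus "(\<Sum>l\<in>J. (c l - c' l) * M m l) mod int p = 0"
        by (simp add: sum_subtractf left_diff_distrib)
    qed
    moreover define d where "d = (\<lambda>l. c l - c' l)"
    ultimately have "\<forall>m\<in>R. (\<Sum>l\<in>J. d l * M m l) mod int p = 0" by simp
    moreover have "(\<forall>m\<in>R. (\<Sum>l\<in>J. d l * M m l) mod int p = 0) \<longrightarrow> (\<forall>l\<in>J. d l mod int p = 0)"
      using J(2) unfolding indep_mod_def by (rule allE)
    ultimately have H: "\<forall>l\<in>J. (c l - c' l) mod int p = 0" unfolding d_def by blast
    show "c = c'"
    proof
      fix l show "c l = c' l"
      proof (cases "l \<in> J")
        case True
        thus ?thesis using c c' H by (intro dvd_small_eq'[of _ "int p"]) (auto simp: dvd_eq_mod_eq_0)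
      next
        case False thus ?thesis using c c' by (auto simp: PiE_def extensional_def)
      qed
    qed
  qed
  hence "card (spn p M R J) = card (PiE J (\<lambda>_. {0..<int p}))"
    unfolding spn_image by (rule card_image)
  also have "\<dots> = p ^ card J" using J(1) by (simp add: card_PiE)
  finally show ?thesis .
qed

lemma rank_props: assumes J: "finite J"
  shows "\<exists>J0. J0 \<subseteq> J \<and> indep_mod p M R J0 \<and> card J0 = rank_mod p M R J"
    and "\<And>J'. J' \<subseteq> J \<Longrightarrow> indep_mod p M R J' \<Longrightarrow> card J' \<le> rank_mod p M R J"
proof -
  let ?S = "{card J' | J'. J' \<subseteq> J \<and> finite J' \<and> indep_mod p M R J'}"
  have fin: "finite ?S"
  proof (rule finite_subset[of _ "{..card J}"])
    show "?S \<subseteq> {..card J}" using J card_mono by fastforce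
  qed simp
  have ne: "?S \<noteq> {}"
  proof -
    have "indep_mod p M R {}" unfolding indep_mod_def by simp
    thus ?thesis by blast
  qed
  have "rank_mod p M R J \<in> ?S" unfolding rank_mod_def using Max_in[OF fin ne] .
  thus "\<exists>J0. J0 \<subseteq> J \<and> indep_mod p M R J0 \<and> card J0 = rank_mod p M R J" by auto
  fix J' assume "J' \<subseteq> J" "indep_mod p M R J'"
  hence "card J' \<in> ?S" using J finite_subset by blast
  thus "card J' \<le> rank_mod p M R J" unfolding rank_mod_def using Max_ge[OF fin] by blast
qed

lemma inv_mod: assumes "\<not> int p dvd x" shows "\<exists>u. int p dvd (u * x - 1)"
proof -
  have pr: "prime (int p)" using p by simp
  have "coprime (int p) x" using assms pr by (simp add: prime_imp_coprime)
  hence g: "gcd x (int p) = 1" by (simp add: coprime_commute coprime_iff_gcd_eq_1)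
  obtain u v where "u * x + v * int p = gcd x (int p)" using bezout_int by blast
  hence "u * x - 1 = (- v) * int p" using g by simp
  thus ?thesis by (metis dvd_triv_right)
qed

lemma card_spn: assumes J: "finite J"
  shows "card (spn p M R J) = p ^ rank_mod p M R J"
proof -
  obtain J0 where J0: "J0 \<subseteq> J" "indep_mod p M R J0" "card J0 = rank_mod p M R J"
    using rank_props(1)[OF J] by blast
  have fJ0: "finite J0" using J J0(1) finite_subset by blast
  have col: "\<exists>e. \<forall>m\<in>R. int p dvd (M m j - (\<Sum>l\<in>J0. e l * M m l))" if j: "j \<in> J" for j
  proof (cases "j \<in> J0")
    case True
    have "(\<Sum>l\<in>J0. (if l = j then 1 else 0) * M m l) = M m j" for m
    proof -
      have "(\<Sum>l\<in>J0. (if l = j then 1 else 0) * M m l) = (\<Sum>l\<in>J0. (if l = j then M m l else 0))"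
        by (rule sum.cong) auto
      also have "\<dots> = M m j" using True by (simp only: sum.delta[OF fJ0] if_True)
      finally show ?thesis .
    qed
    thus ?thesis by (intro exI[of _ "\<lambda>l. if l = j then 1 else 0"]) simp
  next
    case False
    have gt: "card (insert j J0) > rank_mod p M R J" using False fJ0 J0(3) by simp
    have sub: "insert j J0 \<subseteq> J" using J0(1) j by auto
    have "\<not> indep_mod p M R (insert j J0)"
    proof
      assume "indep_mod p M R (insert j J0)"
      hence "card (insert j J0) \<le> rank_mod p M R J" by (rule rank_props(2)[OF J sub])
      thus False using gt by simp
    qed
    then obtain c where c0: "\<forall>m\<in>R. (\<Sum>l\<in>insert j J0. c l * M m l) mod int p = 0"
      and cn: "\<exists>l\<in>insert j J0. c l mod int p \<noteq> 0"
      unfolding indep_mod_def by blast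
    have sumins: "(\<Sum>l\<in>insert j J0. c l * M m l) = c j * M m j + (\<Sum>l\<in>J0. c l * M m l)" for m
      using False fJ0 by simp
    show ?thesis
    proof (cases "int p dvd c j")
      case True
      have "\<forall>m\<in>R. (\<Sum>l\<in>J0. c l * M m l) mod int p = 0"
      proof
        fix m assume "m \<in> R"
        hence "int p dvd (c j * M m j + (\<Sum>l\<in>J0. c l * M m l))"
          using c0 sumins by (simp add: dvd_eq_mod_eq_0)
        moreover have "int p dvd c j * M m j" using True by simp
        ultimately have "int p dvd (\<Sum>l\<in>J0. c l * M m l)" using dvd_add_right_iff by blast
        thus "(\<Sum>l\<in>J0. c l * M m l) mod int p = 0" by (simp add: dvd_eq_mod_eq_0)
      qed
      hence "\<forall>l\<in>J0. c l mod int p = 0" using J0(2) unfolding indep_mod_def by blast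
      hence False using cn True by (auto simp: dvd_eq_mod_eq_0)
      thus ?thesis ..
    next
      case False
      then obtain u where u: "int p dvd (u * c j - 1)" using inv_mod by blast
      have "int p dvd (M m j - (\<Sum>l\<in>J0. (- u * c l) * M m l))" if m: "m \<in> R" for m
      proof -
        have S: "int p dvd (c j * M m j + (\<Sum>l\<in>J0. c l * M m l))"
          using c0 sumins m by (simp add: dvd_eq_mod_eq_0)
        have eq: "M m j - (\<Sum>l\<in>J0. (- u * c l) * M m l)
            = u * (c j * M m j + (\<Sum>l\<in>J0. c l * M m l)) - (u * c j - 1) * M m j"
        proof -
          have "(\<Sum>l\<in>J0. (- u * c l) * M m l) = (\<Sum>l\<in>J0. - (u * (c l * M m l)))"
            by (rule sum.cong) simp_all
          also have "\<dots> = - (u * (\<Sum>l\<in>J0. c l * M m l))"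
            by (simp only: sum_negf sum_distrib_left)
          finally show ?thesis by (simp add: algebra_simps)
        qed
        show ?thesis unfolding eq using S u by (simp add: dvd_diff)
      qed
      hence H: "\<forall>m\<in>R. int p dvd (M m j - (\<Sum>l\<in>J0. (- u * c l) * M m l))" by blast
      show ?thesis by (rule exI[of _ "\<lambda>l. - u * c l"]) (rule H)
    qed
  qed
  hence "\<forall>j\<in>J. \<exists>e. \<forall>m\<in>R. int p dvd (M m j - (\<Sum>l\<in>J0. e l * M m l))" by blast
  hence "\<exists>e. \<forall>j\<in>J. \<forall>m\<in>R. int p dvd (M m j - (\<Sum>l\<in>J0. e j l * M m l))" by (rule bchoice)
  then obtain e where e: "\<forall>j\<in>J. \<forall>m\<in>R. int p dvd (M m j - (\<Sum>l\<in>J0. e j l * M m l))"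
    by blast
  have eqspn: "spn p M R J = spn p M R J0"
  proof
    show "spn p M R J \<subseteq> spn p M R J0"
    proof
      fix x assume "x \<in> spn p M R J"
      then obtain c where x: "x = restrict (\<lambda>m. (\<Sum>l\<in>J. c l * M m l) mod int p) R"
        unfolding spn_def by blast
      define c' where "c' = (\<lambda>l. \<Sum>j\<in>J. c j * e j l)"
      have "(\<Sum>l\<in>J. c l * M m l) mod int p = (\<Sum>l\<in>J0. c' l * M m l) mod int p" if m: "m \<in> R" for m
      proof -
        have "(\<Sum>l\<in>J0. c' l * M m l) = (\<Sum>j\<in>J. c j * (\<Sum>l\<in>J0. e j l * M m l))"
          unfolding c'_def by (simp add: sum_distrib_left sum_distrib_right mult.assoc) (rule sum.swap)
        hence "(\<Sum>l\<in>J. c l * M m l) - (\<Sum>l\<in>J0. c' l * M m l)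
              = (\<Sum>j\<in>J. c j * (M m j - (\<Sum>l\<in>J0. e j l * M m l)))"
          by (simp add: sum_subtractf right_diff_distrib)
        moreover have "int p dvd (\<Sum>j\<in>J. c j * (M m j - (\<Sum>l\<in>J0. e j l * M m l)))"
          using e m by (auto intro!: dvd_sum dvd_mult)
        ultimately show ?thesis by (simp add: mod_eq_dvd_iff)
      qed
      hence "x = restrict (\<lambda>m. (\<Sum>l\<in>J0. c' l * M m l) mod int p) R"
        unfolding x by (auto simp: restrict_def)
      thus "x \<in> spn p M R J0" unfolding spn_def by blast
    qed
  next
    show "spn p M R J0 \<subseteq> spn p M R J"
    proof
      fix x assume "x \<in> spn p M R J0"
      then obtain c where x: "x = restrict (\<lambda>m. (\<Sum>l\<in>J0. c l * M m l) mod int p) R"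
        unfolding spn_def by blast
      define c' where "c' = (\<lambda>l. if l \<in> J0 then c l else 0)"
      have "(\<Sum>l\<in>J. c' l * M m l) = (\<Sum>l\<in>J0. c l * M m l)" for m
      proof -
        have "(\<Sum>l\<in>J. c' l * M m l) = (\<Sum>l\<in>J0. c' l * M m l)"
          using J J0(1) by (intro sum.mono_neutral_right) (auto simp: c'_def)
        thus ?thesis unfolding c'_def by simp
      qed
      hence "x = restrict (\<lambda>m. (\<Sum>l\<in>J. c' l * M m l) mod int p) R" unfolding x by simp
      thus "x \<in> spn p M R J" unfolding spn_def by blast
    qed
  qed
  show ?thesis unfolding eqspn card_spn_indep[OF fJ0 J0(2)] J0(3) ..
qed

end


lemma card_fibers_const:
  assumes S: "finite S" and k: "\<And>x. x \<in> S \<Longrightarrow> card {x'\<in>S. g x' = g x} = k"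
  shows "card S = card (g ` S) * k"
proof -
  have "card S = (\<Sum>x\<in>S. 1::nat)" by simp
  also have "\<dots> = (\<Sum>y\<in>g ` S. \<Sum>x\<in>{x\<in>S. g x = y}. 1)"
    by (rule sum.group[OF S finite_imageI[OF S] subset_refl, symmetric])
  also have "\<dots> = (\<Sum>y\<in>g ` S. k)"
  proof (rule sum.cong)
    fix y assume "y \<in> g ` S"
    then obtain x where x: "x \<in> S" "y = g x" by blast
    show "(\<Sum>x\<in>{x\<in>S. g x = y}. 1) = k" using k[OF x(1)] x(2) by simp
  qed simp
  finally show ?thesis by simp
qed

definition cH :: "'t set \<Rightarrow> ('t \<Rightarrow> 'x) \<Rightarrow> ('t \<Rightarrow> 'y) \<Rightarrow> real" where
  "cH T X Y = - (\<Sum>(x, y) \<in> (\<lambda>t. (X t, Y t)) ` T.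
      let pxy = real (card {t\<in>T. X t = x \<and> Y t = y}) / real (card T);
          py = real (card {t\<in>T. Y t = y}) / real (card T)
      in pxy * log 2 (pxy / py))"

lemma cH_fibers:
  assumes T: "finite T" "T \<noteq> {}"
    and a: "\<And>t. t \<in> T \<Longrightarrow> card {t'\<in>T. X t' = X t \<and> Y t' = Y t} = a"
    and b: "\<And>t. t \<in> T \<Longrightarrow> card {t'\<in>T. Y t' = Y t} = b"
  shows "cH T X Y = log 2 b - log 2 a"
proof -
  obtain t0 where t0: "t0 \<in> T" using T by blast
  have apos: "a > 0"
  proof -
    have "t0 \<in> {t'\<in>T. X t' = X t0 \<and> Y t' = Y t0}" using t0 by simp
    hence "card {t'\<in>T. X t' = X t0 \<and> Y t' = Y t0} > 0" using T(1) by (auto simp: card_gt_0_iff)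
    thus ?thesis using a[OF t0] by simp
  qed
  have bpos: "b > 0"
  proof -
    have "t0 \<in> {t'\<in>T. Y t' = Y t0}" using t0 by simp
    hence "card {t'\<in>T. Y t' = Y t0} > 0" using T(1) by (auto simp: card_gt_0_iff)
    thus ?thesis using b[OF t0] by simp
  qed
  let ?g = "\<lambda>t. (X t, Y t)"
  have N: "card T = card (?g ` T) * a"
    by (rule card_fibers_const[OF T(1)]) (use a in simp)
  let ?N = "real (card T)"
  have tm: "(let pxy = real (card {t\<in>T. X t = x \<and> Y t = y}) / ?N;
          py = real (card {t\<in>T. Y t = y}) / ?N
      in pxy * log 2 (pxy / py)) = (real a / ?N) * log 2 (real a / real b)"
    if xy: "(x, y) \<in> ?g ` T" for x y
  proof -
    obtain t where t: "t \<in> T" "x = X t" "y = Y t" using xy by blast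
    have Npos: "?N > 0" using T by (simp add: card_gt_0_iff)
    have "real (card {t\<in>T. X t = x \<and> Y t = y}) = real a" using a[OF t(1)] t by simp
    moreover have "real (card {t\<in>T. Y t = y}) = real b" using b[OF t(1)] t by simp
    ultimately show ?thesis using Npos by (simp add: Let_def)
  qed
  have "cH T X Y = - (\<Sum>(x, y) \<in> ?g ` T. (real a / ?N) * log 2 (real a / real b))"
    unfolding cH_def by (intro arg_cong[where f = uminus] sum.cong refl) (use tm in auto)
  also have "\<dots> = - (real (card (?g ` T)) * (real a / ?N) * log 2 (real a / real b))"
    by simp
  also have "real (card (?g ` T)) * (real a / ?N) = 1"
    using N apos T by (simp add: card_gt_0_iff)
  finally show ?thesis using apos bpos by (simp add: log_divide)
qed

lemma cH_transport:
  assumes bij: "bij_betw \<Psi> C T" and c: "c \<in> C"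
    and X: "\<And>c. c \<in> C \<Longrightarrow> X (\<Psi> c) = \<alpha> (F c)" and ainj: "inj_on \<alpha> (F ` C)"
    and Y: "\<And>c. c \<in> C \<Longrightarrow> Y (\<Psi> c) = \<beta> (H c)" and binj: "inj_on \<beta> (H ` C)"
  shows "card {t\<in>T. X t = X (\<Psi> c) \<and> Y t = Y (\<Psi> c)} = card {c'\<in>C. F c' = F c \<and> H c' = H c}"
    and "card {t\<in>T. Y t = Y (\<Psi> c)} = card {c'\<in>C. H c' = H c}"
proof -
  have inj: "inj_on \<Psi> C" and im: "\<Psi> ` C = T" using bij by (auto simp: bij_betw_def)
  have "{t\<in>T. X t = X (\<Psi> c) \<and> Y t = Y (\<Psi> c)} = \<Psi> ` {c'\<in>C. F c' = F c \<and> H c' = H c}"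
  proof (rule set_eqI, rule iffI)
    fix t assume t: "t \<in> {t\<in>T. X t = X (\<Psi> c) \<and> Y t = Y (\<Psi> c)}"
    then obtain c' where c': "c' \<in> C" "t = \<Psi> c'" using im by blast
    have "\<alpha> (F c') = \<alpha> (F c)" "\<beta> (H c') = \<beta> (H c)" using t c' X Y c by auto
    hence "F c' = F c" "H c' = H c" using ainj binj c c' by (auto dest: inj_onD)
    thus "t \<in> \<Psi> ` {c'\<in>C. F c' = F c \<and> H c' = H c}" using c' by blast
  next
    fix t assume "t \<in> \<Psi> ` {c'\<in>C. F c' = F c \<and> H c' = H c}"
    then obtain c' where c': "c' \<in> C" "F c' = F c" "H c' = H c" "t = \<Psi> c'" by blast
    thus "t \<in> {t\<in>T. X t = X (\<Psi> c) \<and> Y t = Y (\<Psi> c)}" using X Y c im by auto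
  qed
  thus "card {t\<in>T. X t = X (\<Psi> c) \<and> Y t = Y (\<Psi> c)} = card {c'\<in>C. F c' = F c \<and> H c' = H c}"
    using card_image[OF inj_on_subset[OF inj]] by auto
  have "{t\<in>T. Y t = Y (\<Psi> c)} = \<Psi> ` {c'\<in>C. H c' = H c}"
  proof (rule set_eqI, rule iffI)
    fix t assume t: "t \<in> {t\<in>T. Y t = Y (\<Psi> c)}"
    then obtain c' where c': "c' \<in> C" "t = \<Psi> c'" using im by blast
    have "\<beta> (H c') = \<beta> (H c)" using t c' Y c by auto
    hence "H c' = H c" using binj c c' by (auto dest: inj_onD)
    thus "t \<in> \<Psi> ` {c'\<in>C. H c' = H c}" using c' by blast
  next
    fix t assume "t \<in> \<Psi> ` {c'\<in>C. H c' = H c}"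
    then obtain c' where c': "c' \<in> C" "H c' = H c" "t = \<Psi> c'" by blast
    thus "t \<in> {t\<in>T. Y t = Y (\<Psi> c)}" using Y c im by auto
  qed
  thus "card {t\<in>T. Y t = Y (\<Psi> c)} = card {c'\<in>C. H c' = H c}"
    using card_image[OF inj_on_subset[OF inj]] by auto
qed



definition DS :: "nat \<Rightarrow> nat \<Rightarrow> nat \<Rightarrow> (nat \<Rightarrow> int) set" where
  "DS p a b = {d. \<forall>j. (j \<in> {a<..b} \<longrightarrow> 0 \<le> d j \<and> d j < int p) \<and> (j \<notin> {a<..b} \<longrightarrow> d j = 0)}"

definition Cset :: "nat \<Rightarrow> nat \<Rightarrow> nat \<Rightarrow> (nat \<Rightarrow> nat) \<Rightarrow> (nat \<Rightarrow> nat \<Rightarrow> int) set" where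
  "Cset p L lo ic = PiE {1..L} (\<lambda>l. DS p lo (ic l))"

definition hm :: "nat \<Rightarrow> (nat \<Rightarrow> nat \<Rightarrow> int) \<Rightarrow> nat \<Rightarrow> (nat \<Rightarrow> nat \<Rightarrow> int) \<Rightarrow> nat \<Rightarrow> nat \<Rightarrow> int" where
  "hm p A L c m = (\<lambda>j. (\<Sum>l\<in>{1..L}. A m l * c l j) mod int p)"

definition hR :: "nat \<Rightarrow> (nat \<Rightarrow> nat \<Rightarrow> int) \<Rightarrow> nat \<Rightarrow> nat set \<Rightarrow> (nat \<Rightarrow> nat \<Rightarrow> int) \<Rightarrow> nat \<Rightarrow> nat \<Rightarrow> int" where
  "hR p A L R c = restrict (hm p A L c) R"

lemma finite_DS: "finite (DS p a b)"
proof -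
  have "DS p a b \<subseteq> (\<lambda>e j. if j \<in> {a<..b} then e j else 0) ` PiE {a<..b} (\<lambda>_. {0..<int p})"
  proof
    fix d assume d: "d \<in> DS p a b"
    have "restrict d {a<..b} \<in> PiE {a<..b} (\<lambda>_. {0..<int p})" using d unfolding DS_def by auto
    moreover have "d = (\<lambda>j. if j \<in> {a<..b} then restrict d {a<..b} j else 0)"
      using d unfolding DS_def by (auto simp: fun_eq_iff)
    ultimately show "d \<in> (\<lambda>e j. if j \<in> {a<..b} then e j else 0) ` PiE {a<..b} (\<lambda>_. {0..<int p})"
      by blast
  qed
  moreover have "finite (PiE {a<..b} (\<lambda>_. {0..<int p}))" by (simp add: finite_PiE)
  ultimately show ?thesis using finite_subset by blast
qed

lemma hR_eq_iff: "hR p A L R c' = hR p A L R c \<longleftrightarrow> (\<forall>m\<in>R. hm p A L c' m = hm p A L c m)"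
  unfolding hR_def by (metis restrict_ext restrict_apply')

definition Lj :: "nat \<Rightarrow> (nat \<Rightarrow> nat) \<Rightarrow> nat \<Rightarrow> nat set" where "Lj L ic j = {l\<in>{1..L}. j \<le> ic l}"

context
  fixes p L lo top :: nat and ic :: "nat \<Rightarrow> nat" and A :: "nat \<Rightarrow> nat \<Rightarrow> int"
  assumes p: "prime p" and icb: "\<And>l. l \<in> {1..L} \<Longrightarrow> lo \<le> ic l \<and> ic l \<le> top"
begin

lemma pp: "0 < int p" using p prime_gt_0_nat by simp

abbreviation CS where "CS \<equiv> Cset p L lo ic"

lemma finite_CS: "finite CS"
  unfolding Cset_def by (simp add: finite_PiE finite_DS)

definition z0 :: "nat \<Rightarrow> nat \<Rightarrow> int" where "z0 = (\<lambda>l\<in>{1..L}. \<lambda>j. 0)"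

lemma z0_in: "z0 \<in> CS"
  unfolding z0_def Cset_def DS_def using pp by auto

lemma CS_zero: "c \<in> CS \<Longrightarrow> l \<in> {1..L} \<Longrightarrow> j \<notin> {lo<..ic l} \<Longrightarrow> c l j = 0"
  unfolding Cset_def DS_def by auto
lemma CS_range: "c \<in> CS \<Longrightarrow> l \<in> {1..L} \<Longrightarrow> j \<in> {lo<..ic l} \<Longrightarrow> 0 \<le> c l j \<and> c l j < int p"
  unfolding Cset_def DS_def by auto
lemma CS_ext: "c \<in> CS \<Longrightarrow> l \<notin> {1..L} \<Longrightarrow> c l = undefined"
  unfolding Cset_def by auto

lemma CS_eq: assumes "c \<in> CS" "c' \<in> CS" "\<And>l j. l \<in> {1..L} \<Longrightarrow> j \<in> {lo<..ic l} \<Longrightarrow> c l j = c' l j"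
  shows "c = c'"
proof (intro ext)
  fix l j show "c l j = c' l j"
  proof (cases "l \<in> {1..L}")
    case False thus ?thesis using CS_ext[OF assms(1)] CS_ext[OF assms(2)] by simp
  next
    case True
    show ?thesis
    proof (cases "j \<in> {lo<..ic l}")
      case True2: True thus ?thesis using assms(3) True by blast
    next
      case False thus ?thesis using CS_zero[OF assms(1) True] CS_zero[OF assms(2) True] by simp
    qed
  qed
qed

lemma hm_z0: "hm p A L z0 m = (\<lambda>j. 0)"
  unfolding hm_def z0_def by simp

definition tau :: "(nat \<Rightarrow> nat \<Rightarrow> int) \<Rightarrow> (nat \<Rightarrow> nat \<Rightarrow> int) \<Rightarrow> nat \<Rightarrow> nat \<Rightarrow> int" where
  "tau ofs c = (\<lambda>l\<in>{1..L}. \<lambda>j. (c l j + ofs l j) mod int p)"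

lemma tau_in: assumes c: "c \<in> CS" and ofs: "\<And>l j. l \<in> {1..L} \<Longrightarrow> j \<notin> {lo<..ic l} \<Longrightarrow> ofs l j = 0"
  shows "tau ofs c \<in> CS"
  unfolding Cset_def DS_def tau_def using pp CS_zero[OF c] ofs by auto

lemma tau_inj: "inj_on (tau ofs) CS"
proof (rule inj_onI)
  fix c c' assume c: "c \<in> CS" and c': "c' \<in> CS" and eq: "tau ofs c = tau ofs c'"
  show "c = c'"
  proof (rule CS_eq[OF c c'])
    fix l j assume l: "l \<in> {1..L}" and j: "j \<in> {lo<..ic l}"
    have "(c l j + ofs l j) mod int p = (c' l j + ofs l j) mod int p"
      using fun_cong[OF fun_cong[OF eq, of l], of j] l unfolding tau_def by simp
    hence "int p dvd (c l j - c' l j)" by (simp add: mod_eq_dvd_iff)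
    thus "c l j = c' l j" using CS_range[OF c l j] CS_range[OF c' l j] dvd_small_eq' by blast
  qed
qed

lemma hm_tau: "hm p A L (tau ofs c) m j = ((\<Sum>l\<in>{1..L}. A m l * c l j) + (\<Sum>l\<in>{1..L}. A m l * ofs l j)) mod int p"
proof -
  have "hm p A L (tau ofs c) m j = (\<Sum>l\<in>{1..L}. ((c l j + ofs l j) mod int p) * A m l) mod int p"
    unfolding hm_def tau_def by (simp add: mult.commute)
  also have "\<dots> = (\<Sum>l\<in>{1..L}. (c l j + ofs l j) * A m l) mod int p"
    by (rule sum_mod_coef)
  also have "\<dots> = ((\<Sum>l\<in>{1..L}. A m l * c l j) + (\<Sum>l\<in>{1..L}. A m l * ofs l j)) mod int p"
    by (simp add: sum.distrib algebra_simps)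
  finally show ?thesis .
qed

lemma fiber_card: assumes c: "c \<in> CS"
  shows "card {c'\<in>CS. hR p A L R c' = hR p A L R c} = card {c'\<in>CS. hR p A L R c' = hR p A L R z0}"
proof (rule antisym)
  define mc where "mc = (\<lambda>l j. - c l j)"
  have omc: "mc l j = 0" if "l \<in> {1..L}" "j \<notin> {lo<..ic l}" for l j
    using CS_zero[OF c that] unfolding mc_def by simp
  have oc: "c l j = 0" if "l \<in> {1..L}" "j \<notin> {lo<..ic l}" for l j
    using CS_zero[OF c that] by simp
  show "card {c'\<in>CS. hR p A L R c' = hR p A L R c} \<le> card {c'\<in>CS. hR p A L R c' = hR p A L R z0}"
  proof (rule card_inj_on_le)
    show "inj_on (tau mc) {c'\<in>CS. hR p A L R c' = hR p A L R c}"
      using tau_inj by (rule inj_on_subset) auto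
    show "finite {c'\<in>CS. hR p A L R c' = hR p A L R z0}" using finite_CS by simp
    show "tau mc ` {c'\<in>CS. hR p A L R c' = hR p A L R c} \<subseteq> {c'\<in>CS. hR p A L R c' = hR p A L R z0}"
    proof
      fix x assume "x \<in> tau mc ` {c'\<in>CS. hR p A L R c' = hR p A L R c}"
      then obtain c' where c': "c' \<in> CS" "hR p A L R c' = hR p A L R c" "x = tau mc c'" by blast
      have "x \<in> CS" using tau_in[OF c'(1) omc] c'(3) by simp
      moreover have "hm p A L x m = hm p A L z0 m" if m: "m \<in> R" for m
      proof
        fix j
        have "hm p A L c' m j = hm p A L c m j" using c'(2) m unfolding hR_eq_iff by simp
        hence "int p dvd ((\<Sum>l\<in>{1..L}. A m l * c' l j) - (\<Sum>l\<in>{1..L}. A m l * c l j))"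
          unfolding hm_def by (simp add: mod_eq_dvd_iff)
        moreover have "(\<Sum>l\<in>{1..L}. A m l * mc l j) = - (\<Sum>l\<in>{1..L}. A m l * c l j)"
          unfolding mc_def by (simp add: sum_negf)
        ultimately show "hm p A L x m j = hm p A L z0 m j"
          unfolding c'(3) hm_tau hm_z0 by (simp add: dvd_eq_mod_eq_0)
      qed
      ultimately show "x \<in> {c'\<in>CS. hR p A L R c' = hR p A L R z0}" unfolding hR_eq_iff by simp
    qed
  qed
  show "card {c'\<in>CS. hR p A L R c' = hR p A L R z0} \<le> card {c'\<in>CS. hR p A L R c' = hR p A L R c}"
  proof (rule card_inj_on_le)
    show "inj_on (tau c) {c'\<in>CS. hR p A L R c' = hR p A L R z0}"
      using tau_inj by (rule inj_on_subset) auto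
    show "finite {c'\<in>CS. hR p A L R c' = hR p A L R c}" using finite_CS by simp
    show "tau c ` {c'\<in>CS. hR p A L R c' = hR p A L R z0} \<subseteq> {c'\<in>CS. hR p A L R c' = hR p A L R c}"
    proof
      fix x assume "x \<in> tau c ` {c'\<in>CS. hR p A L R c' = hR p A L R z0}"
      then obtain c' where c': "c' \<in> CS" "hR p A L R c' = hR p A L R z0" "x = tau c c'" by blast
      have "x \<in> CS" using tau_in[OF c'(1) oc] c'(3) by simp
      moreover have "hm p A L x m = hm p A L c m" if m: "m \<in> R" for m
      proof
        fix j
        have "hm p A L c' m = hm p A L z0 m" using c'(2) m unfolding hR_eq_iff by blast
        hence "hm p A L c' m j = hm p A L z0 m j" by (rule fun_cong)
        also have "\<dots> = 0" by (simp only: hm_z0)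
        finally have "hm p A L c' m j = 0" .
        hence "int p dvd (\<Sum>l\<in>{1..L}. A m l * c' l j)"
          unfolding hm_def by (simp add: dvd_eq_mod_eq_0)
        hence X0: "(\<Sum>l\<in>{1..L}. A m l * c' l j) mod int p = 0" by (simp add: dvd_eq_mod_eq_0)
        have "((\<Sum>l\<in>{1..L}. A m l * c' l j) + (\<Sum>l\<in>{1..L}. A m l * c l j)) mod int p
              = (\<Sum>l\<in>{1..L}. A m l * c l j) mod int p"
          using mod_add_left_eq[of "\<Sum>l\<in>{1..L}. A m l * c' l j" "int p" "\<Sum>l\<in>{1..L}. A m l * c l j"] X0
          by simp
        thus "hm p A L x m j = hm p A L c m j"
          unfolding c'(3) hm_tau by (simp add: hm_def)
      qed
      ultimately show "x \<in> {c'\<in>CS. hR p A L R c' = hR p A L R c}" unfolding hR_eq_iff by simp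
    qed
  qed
qed

lemma card_CS_fib: "card CS = card (hR p A L R ` CS) * card {c'\<in>CS. hR p A L R c' = hR p A L R z0}"
  by (rule card_fibers_const[OF finite_CS]) (rule fiber_card)


lemma finite_Lj: "finite (Lj L ic j)" unfolding Lj_def by simp

lemma sum_Lj: assumes c: "c \<in> CS" and j: "j \<in> {lo<..top}"
  shows "(\<Sum>l\<in>{1..L}. A m l * c l j) = (\<Sum>l\<in>Lj L ic j. c l j * A m l)"
proof -
  have "(\<Sum>l\<in>{1..L}. A m l * c l j) = (\<Sum>l\<in>Lj L ic j. A m l * c l j)"
  proof (rule sum.mono_neutral_right[symmetric, symmetric])
    show "\<forall>i\<in>{1..L} - Lj L ic j. A m i * c i j = 0"
    proof
      fix l assume "l \<in> {1..L} - Lj L ic j"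
      hence "l \<in> {1..L}" "j \<notin> {lo<..ic l}" unfolding Lj_def using j by auto
      thus "A m l * c l j = 0" using CS_zero[OF c] by simp
    qed
  qed (auto simp: Lj_def)
  thus ?thesis by (simp add: mult.commute)
qed

definition Phi :: "nat set \<Rightarrow> (nat \<Rightarrow> nat \<Rightarrow> int) \<Rightarrow> nat \<Rightarrow> nat \<Rightarrow> int" where
  "Phi R H = (\<lambda>j\<in>{lo<..top}. restrict (\<lambda>m. H m j) R)"

lemma im_card: "card (hR p A L R ` CS) = (\<Prod>j\<in>{lo<..top}. p ^ rank_mod p A R (Lj L ic j))"
proof -
  have inj: "inj_on (Phi R) (hR p A L R ` CS)"
  proof (rule inj_onI)
    fix H H' assume "H \<in> hR p A L R ` CS" "H' \<in> hR p A L R ` CS" and eq: "Phi R H = Phi R H'"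
    then obtain c c' where c: "c \<in> CS" "H = hR p A L R c" and c': "c' \<in> CS" "H' = hR p A L R c'" by blast
    show "H = H'"
    proof (intro ext)
      fix m j show "H m j = H' m j"
      proof (cases "m \<in> R")
        case False thus ?thesis using c c' by (simp add: hR_def)
      next
        case m: True
        show ?thesis
        proof (cases "j \<in> {lo<..top}")
          case True
          thus ?thesis using fun_cong[OF fun_cong[OF eq, of j], of m] m unfolding Phi_def by simp
        next
          case False
          have z: "\<And>c. c \<in> CS \<Longrightarrow> (\<Sum>l\<in>{1..L}. A m l * c l j) = 0"
          proof -
            fix c assume c: "c \<in> CS"
            show "(\<Sum>l\<in>{1..L}. A m l * c l j) = 0"
            proof (rule sum.neutral, rule ballI)
              fix l assume l: "l \<in> {1..L}"
              hence "j \<notin> {lo<..ic l}" using False icb[OF l] by auto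
              thus "A m l * c l j = 0" using CS_zero[OF c l] by simp
            qed
          qed
          show ?thesis using c c' m z[OF c(1)] z[OF c'(1)] by (simp add: hR_def hm_def)
        qed
      qed
    qed
  qed
  have im: "Phi R ` (hR p A L R ` CS) = PiE {lo<..top} (\<lambda>j. spn p A R (Lj L ic j))"
  proof (rule set_eqI, rule iffI)
    fix P assume "P \<in> Phi R ` (hR p A L R ` CS)"
    then obtain c where c: "c \<in> CS" "P = Phi R (hR p A L R c)" by blast
    show "P \<in> PiE {lo<..top} (\<lambda>j. spn p A R (Lj L ic j))"
    proof
      fix j assume j: "j \<in> {lo<..top}"
      have "P j = restrict (\<lambda>m. (\<Sum>l\<in>Lj L ic j. c l j * A m l) mod int p) R"
        using c j sum_Lj[OF c(1) j] by (auto simp: Phi_def hR_def hm_def restrict_def)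
      thus "P j \<in> spn p A R (Lj L ic j)" unfolding spn_def by (intro CollectI exI[of _ "\<lambda>l. c l j"] conjI) simp_all
    next
      fix j assume jn: "j \<notin> {lo<..top}"
      show "P j = undefined" unfolding c(2) Phi_def restrict_apply using jn by (simp only: if_False)
    qed
  next
    fix P assume P: "P \<in> PiE {lo<..top} (\<lambda>j. spn p A R (Lj L ic j))"
    have "\<forall>j\<in>{lo<..top}. \<exists>e. P j = restrict (\<lambda>m. (\<Sum>l\<in>Lj L ic j. e l * A m l) mod int p) R"
      using P unfolding spn_def by blast
    hence "\<exists>E. \<forall>j\<in>{lo<..top}. P j = restrict (\<lambda>m. (\<Sum>l\<in>Lj L ic j. E j l * A m l) mod int p) R"
      by (rule bchoice)
    then obtain E where E: "\<forall>j\<in>{lo<..top}. P j = restrict (\<lambda>m. (\<Sum>l\<in>Lj L ic j. E j l * A m l) mod int p) R"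
      by blast
    define c where "c = (\<lambda>l\<in>{1..L}. \<lambda>j. if j \<in> {lo<..ic l} then E j l mod int p else 0)"
    have cC: "c \<in> CS" unfolding c_def Cset_def DS_def using pp by auto
    have "Phi R (hR p A L R c) = P"
    proof (intro ext)
      fix j m show "Phi R (hR p A L R c) j m = P j m"
      proof (cases "j \<in> {lo<..top}")
        case False thus ?thesis using P by (auto simp: Phi_def PiE_def extensional_def)
      next
        case j: True
        show ?thesis
        proof (cases "m \<in> R")
          case False thus ?thesis using E j by (simp add: Phi_def)
        next
          case m: True
          have "(\<Sum>l\<in>{1..L}. A m l * c l j) mod int p = (\<Sum>l\<in>Lj L ic j. c l j * A m l) mod int p"
            using sum_Lj[OF cC j] by simp
          also have "(\<Sum>l\<in>Lj L ic j. c l j * A m l) = (\<Sum>l\<in>Lj L ic j. (E j l mod int p) * A m l)"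
            by (rule sum.cong) (use j in \<open>auto simp: c_def Lj_def\<close>)
          also have "(\<Sum>l\<in>Lj L ic j. (E j l mod int p) * A m l) mod int p = (\<Sum>l\<in>Lj L ic j. E j l * A m l) mod int p"
            by (rule sum_mod_coef)
          finally show ?thesis using E j m by (simp add: Phi_def hR_def hm_def)
        qed
      qed
    qed
    thus "P \<in> Phi R ` (hR p A L R ` CS)" using cC by blast
  qed
  have "card (hR p A L R ` CS) = card (PiE {lo<..top} (\<lambda>j. spn p A R (Lj L ic j)))"
    using card_image[OF inj] im by simp
  also have "\<dots> = (\<Prod>j\<in>{lo<..top}. card (spn p A R (Lj L ic j)))" by (simp add: card_PiE)
  also have "\<dots> = (\<Prod>j\<in>{lo<..top}. p ^ rank_mod p A R (Lj L ic j))"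
    by (intro prod.cong refl card_spn[OF p finite_Lj])
  finally show ?thesis .
qed

end


definition tv :: "nat set \<Rightarrow> (nat \<Rightarrow> 'a \<times> 'b) \<Rightarrow> nat \<Rightarrow> 'a" where "tv I \<omega> = (\<lambda>l\<in>I. fst (\<omega> l))"

context
  fixes I :: "nat set" and C :: "nat \<Rightarrow> 'a set" and N :: "nat \<Rightarrow> 'b measure"
  assumes I: "finite I" and C: "\<And>l. l \<in> I \<Longrightarrow> finite (C l) \<and> C l \<noteq> {}"
    and N: "\<And>l. l \<in> I \<Longrightarrow> prob_space (N l)"
begin

abbreviation "Ml l \<equiv> uniform_count_measure (C l) \<Otimes>\<^sub>M N l"
abbreviation "MM \<equiv> PiM I Ml"
abbreviation "TT \<equiv> PiE I C"

lemma Ml_prob: "l \<in> I \<Longrightarrow> prob_space (Ml l)"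
  using C N by (intro prob_space_pair prob_space_uniform_count_measure) auto

lemma space_MM: "space MM = PiE I (\<lambda>l. C l \<times> space (N l))"
  by (simp add: space_PiM space_pair_measure space_uniform_count_measure)

lemma tv_space: "\<omega> \<in> space MM \<Longrightarrow> tv I \<omega> \<in> TT"
  unfolding space_MM tv_def by (auto simp: PiE_iff)

lemma tv_surj: "tv I ` space MM = TT"
proof
  show "tv I ` space MM \<subseteq> TT" using tv_space by blast
  show "TT \<subseteq> tv I ` space MM"
  proof
    fix t assume t: "t \<in> TT"
    have ne: "l \<in> I \<Longrightarrow> space (N l) \<noteq> {}" for l using N prob_space.not_empty by blast
    define \<omega> where "\<omega> = (\<lambda>l\<in>I. (t l, SOME y. y \<in> space (N l)))"
    have "\<omega> \<in> space MM" unfolding space_MM \<omega>_def using t ne by (auto simp: PiE_iff some_in_eq)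
    moreover have "tv I \<omega> = t" unfolding tv_def \<omega>_def using t by (auto simp: fun_eq_iff PiE_iff extensional_def)
    ultimately show "t \<in> tv I ` space MM" by blast
  qed
qed

definition Rt :: "(nat \<Rightarrow> 'a) \<Rightarrow> (nat \<Rightarrow> 'a \<times> 'b) set" where
  "Rt t = PiE I (\<lambda>l. {t l} \<times> space (N l))"

lemma Rt_sets: "t \<in> TT \<Longrightarrow> Rt t \<in> sets MM"
  unfolding Rt_def using I
  by (intro sets_PiM_I_finite) (auto intro!: pair_measureI simp: sets_uniform_count_measure PiE_iff)

lemma Rt_emeasure: assumes t: "t \<in> TT" shows "emeasure MM (Rt t) = ennreal (1 / real (card TT))"
proof -
  have sub: "\<And>l. l \<in> I \<Longrightarrow> {t l} \<times> space (N l) \<subseteq> space (Ml l)"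
    using t by (auto simp: space_pair_measure space_uniform_count_measure PiE_iff)
  have "emeasure MM (Rt t) = emeasure MM (prod_emb I Ml I (PiE I (\<lambda>l. {t l} \<times> space (N l))))"
    unfolding Rt_def using sub by simp
  also have "\<dots> = (\<Prod>l\<in>I. emeasure (Ml l) ({t l} \<times> space (N l)))"
    using Ml_prob I t
    by (intro emeasure_PiM_emb) (auto intro!: pair_measureI simp: sets_uniform_count_measure PiE_iff)
  also have "\<dots> = (\<Prod>l\<in>I. ennreal (1 / real (card (C l))))"
  proof (rule prod.cong[OF refl])
    fix l assume l: "l \<in> I"
    interpret Nl: prob_space "N l" using N l .
    have tl: "t l \<in> C l" using t l by auto
    have "emeasure (Ml l) ({t l} \<times> space (N l)) = emeasure (uniform_count_measure (C l)) {t l} * emeasure (N l) (space (N l))"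
      using tl by (intro Nl.emeasure_pair_measure_Times) (auto simp: sets_uniform_count_measure)
    also have "\<dots> = ennreal (1 / real (card (C l)))"
      using C[OF l] tl by (simp add: emeasure_uniform_count_measure Nl.emeasure_space_1 ennreal_of_nat_eq_real_of_nat divide_ennreal)
    finally show "emeasure (Ml l) ({t l} \<times> space (N l)) = ennreal (1 / real (card (C l)))" .
  qed
  also have "\<dots> = ennreal (\<Prod>l\<in>I. 1 / real (card (C l)))"
    by (simp add: prod_ennreal)
  also have "(\<Prod>l\<in>I. 1 / real (card (C l))) = 1 / real (card TT)"
    using I by (simp add: card_PiE prod_dividef)
  finally show ?thesis .
qed

lemma event_measure:
  "measure MM {\<omega>\<in>space MM. P (tv I \<omega>)} = real (card {t\<in>TT. P t}) / real (card TT)"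
proof -
  let ?S = "{t\<in>TT. P t}"
  have fin: "finite TT" using I C by (simp add: finite_PiE)
  have eq: "{\<omega>\<in>space MM. P (tv I \<omega>)} = (\<Union>t\<in>?S. Rt t)"
  proof (rule set_eqI, rule iffI)
    fix \<omega> assume w: "\<omega> \<in> {\<omega>\<in>space MM. P (tv I \<omega>)}"
    hence "tv I \<omega> \<in> ?S" using tv_space by auto
    moreover have "\<omega> \<in> Rt (tv I \<omega>)" using w unfolding Rt_def space_MM tv_def by (auto simp: PiE_iff)
    ultimately show "\<omega> \<in> (\<Union>t\<in>?S. Rt t)" by blast
  next
    fix \<omega> assume "\<omega> \<in> (\<Union>t\<in>?S. Rt t)"
    then obtain t where t: "t \<in> ?S" "\<omega> \<in> Rt t" by blast
    have "\<omega> \<in> space MM" using t unfolding Rt_def space_MM by (auto simp: PiE_iff)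
    moreover have "tv I \<omega> = t" using t unfolding Rt_def tv_def by (auto simp: PiE_iff fun_eq_iff extensional_def)
    ultimately show "\<omega> \<in> {\<omega>\<in>space MM. P (tv I \<omega>)}" using t by simp
  qed
  have disj: "disjoint_family_on Rt ?S"
    unfolding disjoint_family_on_def
  proof (intro ballI impI)
    fix t t' assume t: "t \<in> ?S" and t': "t' \<in> ?S" and ne: "t \<noteq> t'"
    obtain l where l: "l \<in> I" "t l \<noteq> t' l"
    proof -
      have "\<exists>l\<in>I. t l \<noteq> t' l"
      proof (rule ccontr)
        assume "\<not> (\<exists>l\<in>I. t l \<noteq> t' l)"
        hence "t = t'" using t t' by (auto simp: PiE_iff extensional_def fun_eq_iff)
        thus False using ne by simp
      qed
      thus ?thesis using that by blast
    qed
    show "Rt t \<inter> Rt t' = {}"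
    proof (rule ccontr)
      assume "Rt t \<inter> Rt t' \<noteq> {}"
      then obtain \<omega> where "\<omega> \<in> Rt t" "\<omega> \<in> Rt t'" by blast
      hence "fst (\<omega> l) = t l" "fst (\<omega> l) = t' l" using l(1) unfolding Rt_def by (auto simp: PiE_iff)
      thus False using l(2) by simp
    qed
  qed
  have "emeasure MM {\<omega>\<in>space MM. P (tv I \<omega>)} = (\<Sum>t\<in>?S. emeasure MM (Rt t))"
    unfolding eq using Rt_sets fin disj by (intro sum_emeasure[symmetric]) auto
  also have "\<dots> = (\<Sum>t\<in>?S. ennreal (1 / real (card TT)))"
    by (intro sum.cong refl Rt_emeasure) auto
  also have "\<dots> = of_nat (card ?S) * ennreal (1 / real (card TT))" by simp
  also have "\<dots> = ennreal (real (card ?S) * (1 / real (card TT)))"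
    by (subst ennreal_mult) (auto simp: ennreal_of_nat_eq_real_of_nat)
  also have "\<dots> = ennreal (real (card ?S) / real (card TT))" by simp
  finally show ?thesis unfolding measure_def by simp
qed

lemma cond_entropy_eq:
  assumes X: "\<And>\<omega>. \<omega> \<in> space MM \<Longrightarrow> X \<omega> = X' (tv I \<omega>)"
    and Y: "\<And>\<omega>. \<omega> \<in> space MM \<Longrightarrow> Y \<omega> = Y' (tv I \<omega>)"
  shows "cond_entropy_bits MM X Y = cH TT X' Y'"
proof -
  have im: "(\<lambda>\<omega>. (X \<omega>, Y \<omega>)) ` space MM = (\<lambda>t. (X' t, Y' t)) ` TT"
  proof -
    have "(\<lambda>\<omega>. (X \<omega>, Y \<omega>)) ` space MM = (\<lambda>t. (X' t, Y' t)) ` (tv I ` space MM)"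
      using X Y by (auto simp: image_image intro!: image_cong)
    thus ?thesis using tv_surj by simp
  qed
  have m1: "measure MM {\<omega> \<in> space MM. X \<omega> = x \<and> Y \<omega> = y} = real (card {t\<in>TT. X' t = x \<and> Y' t = y}) / real (card TT)" for x y
  proof -
    have "{\<omega> \<in> space MM. X \<omega> = x \<and> Y \<omega> = y} = {\<omega> \<in> space MM. X' (tv I \<omega>) = x \<and> Y' (tv I \<omega>) = y}"
      using X Y by auto
    thus ?thesis using event_measure[of "\<lambda>t. X' t = x \<and> Y' t = y"] by simp
  qed
  have m2: "measure MM {\<omega> \<in> space MM. Y \<omega> = y} = real (card {t\<in>TT. Y' t = y}) / real (card TT)" for y
  proof -
    have "{\<omega> \<in> space MM. Y \<omega> = y} = {\<omega> \<in> space MM. Y' (tv I \<omega>) = y}"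
      using Y by auto
    thus ?thesis using event_measure[of "\<lambda>t. Y' t = y"] by simp
  qed
  show ?thesis unfolding cond_entropy_bits_def cH_def im m1 m2 ..
qed

end


lemma indep_of_rank: assumes "prime p" "finite Cc" "rank_mod p M R Cc = card Cc"
  shows "indep_mod p M R Cc"
proof -
  obtain J0 where J0: "J0 \<subseteq> Cc" "indep_mod p M R J0" "card J0 = rank_mod p M R Cc"
    using rank_props(1)[OF assms(1) assms(2)] by blast
  have "J0 = Cc" using card_subset_eq[OF assms(2) J0(1)] J0(3) assms(3) by simp
  thus ?thesis using J0(2) by simp
qed

lemma i_mono_gen: assumes m: "\<forall>k. 1 \<le> k \<and> k < n \<longrightarrow> i k \<le> i (Suc k)"
  and k: "1 \<le> k" "k \<le> k'" "k' \<le> n" shows "i k \<le> (i k' :: nat)"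
  using k(2,3)
proof (induction k' rule: dec_induct)
  case base thus ?case by simp
next
  case (step q)
  hence "i k \<le> i q" by simp
  moreover have "i q \<le> i (Suc q)" using m step k(1) by auto
  ultimately show ?case by simp
qed

lemma regroup: fixes i :: "nat \<Rightarrow> nat" assumes m: "\<forall>k. 1 \<le> k \<and> k < n \<longrightarrow> i k \<le> i (Suc k)"
  and q: "1 \<le> q" "q \<le> n"
  shows "(\<Sum>j\<in>{i 1<..i q}. g j) = (\<Sum>k\<in>{1..<q}. \<Sum>j\<in>{i k<..i (Suc k)}. (g j :: real))"
  using q
proof (induction q rule: dec_induct)
  case base
  have "{i 1<..i 1} = {}" by auto
  thus ?case by simp
next
  case (step q)
  have a: "i 1 \<le> i q" using i_mono_gen[OF m, of 1 q] step by simp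
  have b: "i q \<le> i (Suc q)" using m step by auto
  have "{i 1<..i (Suc q)} = {i 1<..i q} \<union> {i q<..i (Suc q)}" using a b by auto
  hence "(\<Sum>j\<in>{i 1<..i (Suc q)}. g j) = (\<Sum>j\<in>{i 1<..i q}. g j) + (\<Sum>j\<in>{i q<..i (Suc q)}. g j)"
    by (simp add: sum.union_disjoint ivl_disj_int)
  also have "\<dots> = (\<Sum>k\<in>{1..<q}. \<Sum>j\<in>{i k<..i (Suc k)}. g j) + (\<Sum>j\<in>{i q<..i (Suc q)}. g j)"
    using step by simp
  also have "\<dots> = (\<Sum>k\<in>{1..<Suc q}. \<Sum>j\<in>{i k<..i (Suc k)}. g j)"
    using step by (simp add: sum.atLeastLessThan_Suc)
  finally show ?case .
qed

theorem theorem8: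
  fixes \<gamma> L K :: nat
    and G :: "'n::finite \<Rightarrow> nat \<Rightarrow> int"
    and B :: "real^'n^'n"
    and i :: "nat \<Rightarrow> nat"
    and Q :: "(real^'n) set \<Rightarrow> real^'n \<Rightarrow> real^'n"
    and \<pi> :: "nat \<Rightarrow> nat"
    and \<beta> :: "nat \<Rightarrow> real"
    and A :: "nat \<Rightarrow> nat \<Rightarrow> int"
  assumes prime: "prime \<gamma>"
    and L_pos: "L \<ge> 1" and K_pos: "K \<ge> 1"
    and G_rank: "rank_mod \<gamma> G UNIV {1..K} = K"
    and B_inv: "invertible B"
    and i_mono: "\<forall>k. 1 \<le> k \<and> k < 2 * L \<longrightarrow> i k \<le> i (Suc k)"
    and i_le: "i (2 * L) \<le> K"
  defines "\<Lambda> \<equiv> \<lambda>k. constrA \<gamma> B G (i k)"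
  assumes Q_nearest: "\<forall>k\<in>{1..2 * L}. nearest_quantizer (\<Lambda> k) (Q (\<Lambda> k))"
    and \<pi>_perm: "\<pi> permutes {1..2 * L}"
    and \<pi>_nested: "\<forall>l\<in>{1..L}. \<Lambda> (\<pi> (2 * l - 1)) \<subseteq> \<Lambda> (\<pi> (2 * l))"
  defines "\<Lambda>s \<equiv> \<lambda>l. \<Lambda> (\<pi> (2 * l - 1))"
    and "\<Lambda>c \<equiv> \<lambda>l. \<Lambda> (\<pi> (2 * l))"
  defines "C \<equiv> \<lambda>l. \<Lambda>c l \<inter> voronoi Q (\<Lambda>s l)"
  assumes \<beta>_pos: "\<forall>l\<in>{1..L}. \<beta> l > 0"
    and A_inv: "\<exists>Ainv :: nat \<Rightarrow> nat \<Rightarrow> int. \<forall>p\<in>{1..L}. \<forall>q\<in>{1..L}.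
                  (\<Sum>k\<in>{1..L}. A p k * Ainv k q) mod int \<gamma> = (if p = q then 1 else 0) mod int \<gamma>"
    and common_shaping: "\<forall>l\<in>{1..L}. \<Lambda>s l = \<Lambda>s 1"
  defines "rv \<equiv> \<lambda>k. (1 / real CARD('n)) * log 2 (real (card (\<Lambda> (Suc k) \<inter> voronoi Q (\<Lambda> k))))"
    and "Lk \<equiv> \<lambda>k. {l\<in>{1..L}. \<Lambda>s l \<subseteq> \<Lambda> k \<and> \<Lambda> k \<subseteq> \<Lambda> (Suc k) \<and> \<Lambda> (Suc k) \<subseteq> \<Lambda>c l}"
  defines "f \<equiv> \<lambda>S. \<Sum>k\<in>{1..2 * L - 1}.
              (real (rank_mod \<gamma> A {1..L} (Lk k)) - real (rank_mod \<gamma> A ({1..L} - S) (Lk k))) * rv k"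
  defines "M \<equiv> PiM {1..L} (\<lambda>l. uniform_count_measure (C l) \<Otimes>\<^sub>M
                 uniform_measure lebesgue ((\<lambda>x. (1 / \<beta> l) *\<^sub>R x) ` voronoi Q (\<Lambda>s l)))"
  defines "v \<equiv> \<lambda>m \<omega>. modl Q (\<Lambda> 1)
              (\<Sum>l\<in>{1..L}. of_int (A m l) *\<^sub>R (fst (\<omega> l) - Q (\<Lambda>s l) (fst (\<omega> l) - \<beta> l *\<^sub>R snd (\<omega> l))))"
  shows "{R \<in> extensional {1..L}. \<forall>S\<subseteq>{1..L}. (\<Sum>m\<in>S. R m) \<ge> f S} =
         {R \<in> extensional {1..L}. \<forall>S\<subseteq>{1..L}. (\<Sum>m\<in>S. R m) \<ge>
            (1 / real CARD('n)) * cond_entropy_bits M (\<lambda>\<omega>. restrict (\<lambda>m. v m \<omega>) S)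
                                                     (\<lambda>\<omega>. restrict (\<lambda>m. v m \<omega>) ({1..L} - S))}"
proof -
  have "rank_mod \<gamma> G UNIV {1..K} = card {1..K}" using G_rank by simp
  hence fullr: "indep_mod \<gamma> G UNIV {1..K}" by (rule indep_of_rank[OF prime finite_atLeastAtMost])
  interpret LS \<gamma> G B K using prime B_inv fullr by unfold_locales
  have Lam: "\<And>k. \<Lambda> k = constrA \<gamma> B G (i k)" unfolding \<Lambda>_def by simp
  have imono: "\<And>k k'. 1 \<le> k \<Longrightarrow> k \<le> k' \<Longrightarrow> k' \<le> 2*L \<Longrightarrow> i k \<le> i k'"
    using i_mono_gen[OF i_mono] by blast
  define lo where "lo = i 1"
  define top where "top = i (2*L)"
  define ic where "ic = (\<lambda>l. i (\<pi> (2*l)))"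
  have lo_le: "lo \<le> i k \<and> i k \<le> top" if "k \<in> {1..2*L}" for k
    using imono[of 1 k] imono[of k "2*L"] that unfolding lo_def top_def by auto
  have topK: "top \<le> K" using i_le unfolding top_def .
  have pi_in: "\<pi> x \<in> {1..2*L}" if "x \<in> {1..2*L}" for x
    using permutes_in_image[OF \<pi>_perm] that by blast
  have idx: "2*l - 1 \<in> {1..2*L}" "2*l \<in> {1..2*L}" if "l \<in> {1..L}" for l
    using that by auto
  have icb: "lo \<le> ic l \<and> ic l \<le> top" if "l \<in> {1..L}" for l
    unfolding ic_def using lo_le[OF pi_in[OF idx(2)[OF that]]] .
  have iK: "i k \<le> K" if "k \<in> {1..2*L}" for k using lo_le[OF that] topK by simp
  have NQk: "nearest_quantizer (constrA \<gamma> B G (i k)) (Q (constrA \<gamma> B G (i k)))" if "k \<in> {1..2*L}" for k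
    using Q_nearest that unfolding Lam by blast
  have NQ1: "nearest_quantizer (constrA \<gamma> B G lo) (Q (constrA \<gamma> B G lo))"
    using NQk[of 1] L_pos unfolding lo_def by simp
  have Ls1: "\<Lambda>s 1 = constrA \<gamma> B G lo"
  proof -
    have "1 \<in> \<pi> ` {1..2*L}" using permutes_image[OF \<pi>_perm] L_pos by auto
    then obtain j where j: "j \<in> {1..2*L}" "\<pi> j = 1" by auto
    show ?thesis
    proof (cases "even j")
      case False
      then obtain q where q: "j = 2*q + 1" by (metis oddE)
      define l0 where "l0 = q + 1"
      have l0: "l0 \<in> {1..L}" "2*l0 - 1 = j" using j q unfolding l0_def by auto
      have "\<Lambda>s l0 = constrA \<gamma> B G lo" unfolding \<Lambda>s_def Lam using l0(2) j(2) lo_def by simp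
      thus ?thesis using common_shaping l0(1) by metis
    next
      case True
      then obtain q where q: "j = 2*q" by (metis evenE)
      have l0: "q \<in> {1..L}" using j q by auto
      have c: "\<Lambda>c q = constrA \<gamma> B G lo" unfolding \<Lambda>c_def Lam using q j(2) lo_def by simp
      have "\<Lambda>s q \<subseteq> \<Lambda>c q" using \<pi>_nested l0 unfolding \<Lambda>s_def \<Lambda>c_def by blast
      moreover have "constrA \<gamma> B G lo \<subseteq> \<Lambda>s q"
        unfolding \<Lambda>s_def Lam using lo_le[OF pi_in[OF idx(1)[OF l0]]] by (intro lat_mono) simp
      ultimately have "\<Lambda>s q = constrA \<gamma> B G lo" using c by blast
      thus ?thesis using common_shaping l0 by metis
    qed
  qed
  have Ls: "\<Lambda>s l = constrA \<gamma> B G lo" if "l \<in> {1..L}" for l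
    using common_shaping that Ls1 by metis
  have Lc: "\<Lambda>c l = constrA \<gamma> B G (ic l)" if "l \<in> {1..L}" for l
    unfolding \<Lambda>c_def Lam ic_def ..
  have Cl: "C l = constrA \<gamma> B G (ic l) \<inter> voronoi Q (constrA \<gamma> B G lo)" if "l \<in> {1..L}" for l
    unfolding C_def using Ls[OF that] Lc[OF that] by simp
  have DsEq: "Dset a b = DS \<gamma> a b" for a b unfolding Dset_def DS_def ..
  have Crep: "C l = repm Q lo ` Dset lo (ic l)" if "l \<in> {1..L}" for l
    unfolding Cl[OF that] using icb[OF that] topK
    by (intro rep_image[where a=lo and b="ic l" and Q=Q, OF NQ1]) auto
  have Cfin: "finite (C l) \<and> C l \<noteq> {}" if "l \<in> {1..L}" for l
  proof
    show "finite (C l)" using Crep[OF that] finite_Dset by simp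
    have "repm Q lo (\<lambda>_. 0) \<in> C l" using Crep[OF that] Dset_zero by blast
    thus "C l \<noteq> {}" by blast
  qed
  define Psi where "Psi = (\<lambda>c. \<lambda>l\<in>{1..L}. repm Q lo (c l))"
  let ?CS = "Cset \<gamma> L lo ic"
  let ?T = "PiE {1..L} C"
  have bijPsi: "bij_betw Psi ?CS ?T"
  proof (rule bij_betw_imageI)
    show "inj_on Psi ?CS"
    proof (rule inj_onI)
      fix c c' assume c: "c \<in> ?CS" and c': "c' \<in> ?CS" and eq: "Psi c = Psi c'"
      show "c = c'"
      proof
        fix l show "c l = c' l"
        proof (cases "l \<in> {1..L}")
          case True
          have "repm Q lo (c l) = repm Q lo (c' l)" using fun_cong[OF eq, of l] True by (simp add: Psi_def)
          moreover have "c l \<in> Dset lo (ic l)" "c' l \<in> Dset lo (ic l)"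
            using c c' True unfolding Cset_def DsEq by auto
          ultimately show ?thesis
            using rep_inj[where a=lo and b="ic l" and Q=Q, OF NQ1] icb[OF True] topK
            by (auto dest: inj_onD)
        next
          case False thus ?thesis using c c' unfolding Cset_def by (auto simp: PiE_iff extensional_def)
        qed
      qed
    qed
    show "Psi ` ?CS = ?T"
    proof
      show "Psi ` ?CS \<subseteq> ?T"
      proof
        fix t assume "t \<in> Psi ` ?CS"
        then obtain c where c: "c \<in> ?CS" "t = Psi c" by blast
        show "t \<in> ?T" unfolding c(2) Psi_def
        proof
          fix l assume l: "l \<in> {1..L}"
          have "c l \<in> Dset lo (ic l)" using c l unfolding Cset_def DsEq by auto
          thus "(\<lambda>l\<in>{1..L}. repm Q lo (c l)) l \<in> C l" using Crep[OF l] l by auto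
        qed auto
      qed
      show "?T \<subseteq> Psi ` ?CS"
      proof
        fix t assume t: "t \<in> ?T"
        have "\<forall>l\<in>{1..L}. \<exists>d. d \<in> Dset lo (ic l) \<and> t l = repm Q lo d"
          using t Crep by (auto simp: PiE_iff)
        hence "\<exists>d. \<forall>l\<in>{1..L}. d l \<in> Dset lo (ic l) \<and> t l = repm Q lo (d l)" by (rule bchoice)
        then obtain d where d: "\<forall>l\<in>{1..L}. d l \<in> Dset lo (ic l) \<and> t l = repm Q lo (d l)" by blast
        define c where "c = restrict d {1..L}"
        have "c \<in> ?CS" unfolding c_def Cset_def using d DsEq by auto
        moreover have "Psi c = t" unfolding Psi_def c_def using d t by (auto simp: fun_eq_iff PiE_iff extensional_def)
        ultimately show "t \<in> Psi ` ?CS" by blast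
      qed
    qed
  qed
  define N where "N = (\<lambda>l. uniform_measure lebesgue ((\<lambda>x. (1 / \<beta> l) *\<^sub>R x) ` voronoi Q (\<Lambda>s l)))"
  have Meq: "M = PiM {1..L} (\<lambda>l. uniform_count_measure (C l) \<Otimes>\<^sub>M N l)" unfolding M_def N_def ..
  have probN: "prob_space (N l)" if "l \<in> {1..L}" for l
  proof -
    have bl: "\<beta> l > 0" using \<beta>_pos that by blast
    show ?thesis unfolding N_def Ls[OF that]
      by (rule prob_space_uniform_measure)
         (use W_props[where a=lo and Q=Q and \<beta>="\<beta> l", OF NQ1 bl] in simp_all)
  qed
  have icb': "\<And>l. l \<in> {1..L} \<Longrightarrow> lo \<le> ic l \<and> ic l \<le> top" by (rule icb)
  define vv where "vv = (\<lambda>m t. modl Q (constrA \<gamma> B G lo) (\<Sum>l\<in>{1..L}. of_int (A m l) *\<^sub>R t l))"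
  have v_eq: "v m \<omega> = vv m (tv {1..L} \<omega>)" for m \<omega>
  proof -
    let ?Lo = "constrA \<gamma> B G lo"
    let ?q = "\<lambda>l. Q (\<Lambda>s l) (fst (\<omega> l) - \<beta> l *\<^sub>R snd (\<omega> l))"
    have q: "?q l \<in> ?Lo" if "l \<in> {1..L}" for l
      using q_in[where a=lo and Q=Q, OF NQ1] Ls[OF that] by simp
    have "(\<Sum>l\<in>{1..L}. of_int (A m l) *\<^sub>R (fst (\<omega> l) - ?q l))
        = (\<Sum>l\<in>{1..L}. of_int (A m l) *\<^sub>R tv {1..L} \<omega> l) - (\<Sum>l\<in>{1..L}. of_int (A m l) *\<^sub>R ?q l)"
    proof -
      have "(\<Sum>l\<in>{1..L}. of_int (A m l) *\<^sub>R tv {1..L} \<omega> l) = (\<Sum>l\<in>{1..L}. of_int (A m l) *\<^sub>R fst (\<omega> l))"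
        unfolding tv_def by (intro sum.cong refl) simp
      thus ?thesis by (simp add: scaleR_diff_right sum_subtractf)
    qed
    moreover have "(\<Sum>l\<in>{1..L}. of_int (A m l) *\<^sub>R ?q l) \<in> ?Lo"
      using q by (intro lat_sum lat_scal) auto
    moreover have "\<Lambda> 1 = ?Lo" unfolding Lam lo_def ..
    ultimately show ?thesis unfolding v_def vv_def
      using modl_shift_diff[where a=lo and Q=Q, OF NQ1] by simp
  qed
  have hm_in: "hm \<gamma> A L c m \<in> Dset lo top" if c: "c \<in> ?CS" for c m
    unfolding Dset_def
  proof (intro CollectI allI conjI impI)
    fix j assume "j \<in> {lo<..top}"
    show "0 \<le> hm \<gamma> A L c m j" "hm \<gamma> A L c m j < int \<gamma>" unfolding hm_def using gpos by simp_all
  next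
    fix j assume j: "j \<notin> {lo<..top}"
    have "c l j = 0" if l: "l \<in> {1..L}" for l
      using CS_zero[OF prime icb' c l] j icb[OF l] by auto
    thus "hm \<gamma> A L c m j = 0" unfolding hm_def by simp
  qed
  have vvPsi: "vv m (Psi c) = repm Q lo (hm \<gamma> A L c m)" if c: "c \<in> ?CS" for c m
  proof -
    let ?Lo = "constrA \<gamma> B G lo"
    let ?e = "\<lambda>l. emb (gen K (c l))"
    let ?q = "\<lambda>l. Q ?Lo (?e l)"
    have "(\<Sum>l\<in>{1..L}. of_int (A m l) *\<^sub>R Psi c l) = (\<Sum>l\<in>{1..L}. of_int (A m l) *\<^sub>R ?e l) - (\<Sum>l\<in>{1..L}. of_int (A m l) *\<^sub>R ?q l)"
      unfolding Psi_def repm_def modl_def by (simp add: scaleR_diff_right sum_subtractf)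
    moreover have "(\<Sum>l\<in>{1..L}. of_int (A m l) *\<^sub>R ?q l) \<in> ?Lo"
      using q_in[where a=lo and Q=Q, OF NQ1] by (intro lat_sum lat_scal) auto
    ultimately have s1: "vv m (Psi c) = modl Q ?Lo (\<Sum>l\<in>{1..L}. of_int (A m l) *\<^sub>R ?e l)"
      unfolding vv_def using modl_shift_diff[where a=lo and Q=Q, OF NQ1] by simp
    have g: "gen K (\<lambda>j. \<Sum>l\<in>{1..L}. A m l * c l j) = (\<lambda>r. \<Sum>l\<in>{1..L}. A m l * gen K (c l) r)"
    proof
      fix r
      have "gen K (\<lambda>j. \<Sum>l\<in>{1..L}. A m l * c l j) r = (\<Sum>l\<in>{1..L}. gen K (\<lambda>j. A m l * c l j) r)"
        by (rule gen_sum)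
      also have "\<dots> = (\<Sum>l\<in>{1..L}. A m l * gen K (c l) r)" by (simp only: gen_scal)
      finally show "gen K (\<lambda>j. \<Sum>l\<in>{1..L}. A m l * c l j) r = (\<Sum>l\<in>{1..L}. A m l * gen K (c l) r)" .
    qed
    have "(\<Sum>l\<in>{1..L}. of_int (A m l) *\<^sub>R ?e l) = emb (gen K (\<lambda>j. \<Sum>l\<in>{1..L}. A m l * c l j))"
      unfolding g by (simp add: emb_sum emb_scal)
    also have "\<dots> = emb (gen K (hm \<gamma> A L c m)) + emb (gen K (\<lambda>j. (\<Sum>l\<in>{1..L}. A m l * c l j) - hm \<gamma> A L c m j))"
    proof -
      have "gen K (\<lambda>j. \<Sum>l\<in>{1..L}. A m l * c l j) = (\<lambda>r. gen K (hm \<gamma> A L c m) r + gen K (\<lambda>j. (\<Sum>l\<in>{1..L}. A m l * c l j) - hm \<gamma> A L c m j) r)"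
        by (rule ext, subst gen_add[symmetric]) simp
      thus ?thesis by (simp add: emb_add)
    qed
    finally have s2: "(\<Sum>l\<in>{1..L}. of_int (A m l) *\<^sub>R ?e l) = emb (gen K (hm \<gamma> A L c m)) + emb (gen K (\<lambda>j. (\<Sum>l\<in>{1..L}. A m l * c l j) - hm \<gamma> A L c m j))" .
    have "gen K (\<lambda>j. (\<Sum>l\<in>{1..L}. A m l * c l j) - hm \<gamma> A L c m j) \<in> Lint lo"
    proof (rule Lint_dvd, rule gen_dvd)
      fix j show "int \<gamma> dvd ((\<Sum>l\<in>{1..L}. A m l * c l j) - hm \<gamma> A L c m j)"
        unfolding hm_def by (simp add: mod_eq_dvd_iff[symmetric])
    qed
    hence "emb (gen K (\<lambda>j. (\<Sum>l\<in>{1..L}. A m l * c l j) - hm \<gamma> A L c m j)) \<in> ?Lo"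
      unfolding mem_lat by blast
    hence "modl Q ?Lo (\<Sum>l\<in>{1..L}. of_int (A m l) *\<^sub>R ?e l) = modl Q ?Lo (emb (gen K (hm \<gamma> A L c m)))"
      unfolding s2 using modl_shift[where a=lo and Q=Q, OF NQ1] by simp
    thus ?thesis unfolding s1 repm_def by simp
  qed
  have lo_top: "lo \<le> top" using icb[of 1] L_pos by auto
  have Lk_eq: "Lk k = {l\<in>{1..L}. i (Suc k) \<le> ic l}" if k: "k \<in> {1..<2*L}" for k
  proof -
    have k1: "k \<in> {1..2*L}" "Suc k \<in> {1..2*L}" using k by auto
    have "(\<Lambda>s l \<subseteq> \<Lambda> k \<and> \<Lambda> k \<subseteq> \<Lambda> (Suc k) \<and> \<Lambda> (Suc k) \<subseteq> \<Lambda>c l) \<longleftrightarrow> i (Suc k) \<le> ic l"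
      if l: "l \<in> {1..L}" for l
    proof -
      have "\<Lambda>s l \<subseteq> \<Lambda> k" unfolding Ls[OF l] Lam using lo_le[OF k1(1)] by (intro lat_mono) simp
      moreover have "\<Lambda> k \<subseteq> \<Lambda> (Suc k)" unfolding Lam using imono[of k "Suc k"] k by (intro lat_mono) simp
      moreover have "\<Lambda> (Suc k) \<subseteq> \<Lambda>c l \<longleftrightarrow> i (Suc k) \<le> ic l"
        unfolding Lam Lc[OF l] using iK[OF k1(2)] icb[OF l] topK by (intro lat_subset_iff) auto
      ultimately show ?thesis by blast
    qed
    thus ?thesis unfolding Lk_def by blast
  qed
  have Lj_eq: "Lj L ic j = Lk k" if k: "k \<in> {1..<2*L}" and j: "j \<in> {i k<..i (Suc k)}" for k j
  proof -
    have "j \<le> ic l \<longleftrightarrow> i (Suc k) \<le> ic l" if l: "l \<in> {1..L}" for l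
    proof -
      have kp: "\<pi> (2*l) \<in> {1..2*L}" using pi_in[OF idx(2)[OF l]] .
      show ?thesis
      proof (cases "\<pi> (2*l) \<le> k")
        case True
        hence "ic l \<le> i k" unfolding ic_def using imono[of "\<pi> (2*l)" k] kp k by auto
        thus ?thesis using j by auto
      next
        case False
        hence "i (Suc k) \<le> ic l" unfolding ic_def using imono[of "Suc k" "\<pi> (2*l)"] kp k by auto
        thus ?thesis using j by auto
      qed
    qed
    thus ?thesis unfolding Lk_eq[OF k] Lj_def by blast
  qed
  have rv_eq: "rv k = (1 / real CARD('n)) * (real (i (Suc k) - i k) * log 2 (real \<gamma>))"
    if k: "k \<in> {1..<2*L}" for k
  proof -
    have k1: "k \<in> {1..2*L}" "Suc k \<in> {1..2*L}" using k by auto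
    have "card (\<Lambda> (Suc k) \<inter> voronoi Q (\<Lambda> k)) = \<gamma> ^ (i (Suc k) - i k)"
      unfolding Lam using imono[of k "Suc k"] k iK[OF k1(2)]
      by (intro card_lat_vor[where a="i k" and b="i (Suc k)" and Q=Q, OF NQk[OF k1(1)]]) auto
    thus ?thesis unfolding rv_def using gpos by (simp add: log_nat_power)
  qed
  have logim: "log 2 (real (card (hR \<gamma> A L R ` ?CS))) = (\<Sum>j\<in>{lo<..top}. real (rank_mod \<gamma> A R (Lj L ic j))) * log 2 (real \<gamma>)" for R
  proof -
    have "card (hR \<gamma> A L R ` ?CS) = (\<Prod>j\<in>{lo<..top}. \<gamma> ^ rank_mod \<gamma> A R (Lj L ic j))"
      by (rule im_card) (use prime icb in auto)
    hence "card (hR \<gamma> A L R ` ?CS) = \<gamma> ^ (\<Sum>j\<in>{lo<..top}. rank_mod \<gamma> A R (Lj L ic j))"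
      by (simp add: power_sum)
    thus ?thesis using gpos by (simp add: log_nat_power)
  qed
  have regr: "(\<Sum>j\<in>{lo<..top}. g (Lj L ic j)) = (\<Sum>k\<in>{1..<2*L}. real (i (Suc k) - i k) * g (Lk k))" for g :: "nat set \<Rightarrow> real"
  proof -
    have "(\<Sum>j\<in>{lo<..top}. g (Lj L ic j)) = (\<Sum>k\<in>{1..<2*L}. \<Sum>j\<in>{i k<..i (Suc k)}. g (Lj L ic j))"
      unfolding lo_def top_def using L_pos by (intro regroup[OF i_mono]) auto
    also have "\<dots> = (\<Sum>k\<in>{1..<2*L}. \<Sum>j\<in>{i k<..i (Suc k)}. g (Lk k))"
      by (intro sum.cong refl) (simp add: Lj_eq)
    also have "\<dots> = (\<Sum>k\<in>{1..<2*L}. real (i (Suc k) - i k) * g (Lk k))" by simp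
    finally show ?thesis .
  qed
  have CSfin: "finite ?CS" by (rule finite_CS) (use prime icb in auto)
  have z0in: "z0 L \<in> ?CS" by (rule z0_in) (use prime icb in auto)
  have TPsi: "Psi ` ?CS = ?T" using bijPsi by (simp add: bij_betw_def)
  have Tfin: "finite ?T" "?T \<noteq> {}"
  proof -
    show "finite ?T" unfolding TPsi[symmetric] by (rule finite_imageI[OF CSfin])
    show "?T \<noteq> {}" using TPsi z0in by blast
  qed
  have injgen: "inj_on (\<lambda>H. restrict (\<lambda>m. repm Q lo (H m)) R) (hR \<gamma> A L R ` ?CS)" for R
  proof (rule inj_onI)
    fix H H' assume H: "H \<in> hR \<gamma> A L R ` ?CS" and H': "H' \<in> hR \<gamma> A L R ` ?CS"
      and eq: "restrict (\<lambda>m. repm Q lo (H m)) R = restrict (\<lambda>m. repm Q lo (H' m)) R"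
    obtain c where c: "c \<in> ?CS" "H = hR \<gamma> A L R c" using H by blast
    obtain c' where c': "c' \<in> ?CS" "H' = hR \<gamma> A L R c'" using H' by blast
    show "H = H'"
    proof
      fix m show "H m = H' m"
      proof (cases "m \<in> R")
        case True
        have "repm Q lo (hm \<gamma> A L c m) = repm Q lo (hm \<gamma> A L c' m)"
          using fun_cong[OF eq, of m] True c(2) c'(2) by (simp add: hR_def)
        hence "hm \<gamma> A L c m = hm \<gamma> A L c' m"
          using rep_inj[where a=lo and b=top and Q=Q, OF NQ1 lo_top topK] hm_in[OF c(1)] hm_in[OF c'(1)]
          by (auto dest: inj_onD)
        thus ?thesis using True c(2) c'(2) by (simp add: hR_def)
      next
        case False thus ?thesis using c(2) c'(2) by (simp add: hR_def)
      qed
    qed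
  qed
  have fibI: "card {c'\<in>?CS. hR \<gamma> A L R c' = hR \<gamma> A L R c} = card {c'\<in>?CS. hR \<gamma> A L R c' = hR \<gamma> A L R (z0 L)}"
    if c: "c \<in> ?CS" for R c
    by (rule fiber_card[OF _ _ c]) (use prime icb in auto)
  have CSfib: "card ?CS = card (hR \<gamma> A L R ` ?CS) * card {c'\<in>?CS. hR \<gamma> A L R c' = hR \<gamma> A L R (z0 L)}" for R
    by (rule card_CS_fib) (use prime icb in auto)
  have impos: "card (hR \<gamma> A L R ` ?CS) > 0" for R
    using CSfin z0in by (auto simp: card_gt_0_iff)
  have cspos: "card ?CS > 0" using CSfin z0in by (auto simp: card_gt_0_iff)
  have key: "(1 / real CARD('n)) * cond_entropy_bits M (\<lambda>\<omega>. restrict (\<lambda>m. v m \<omega>) S)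
               (\<lambda>\<omega>. restrict (\<lambda>m. v m \<omega>) ({1..L} - S)) = f S" if S: "S \<subseteq> {1..L}" for S
  proof -
    define Sb where "Sb = {1..L} - S"
    define X' where "X' = (\<lambda>t. restrict (\<lambda>m. vv m t) S)"
    define Y' where "Y' = (\<lambda>t. restrict (\<lambda>m. vv m t) Sb)"
    have ce: "cond_entropy_bits M (\<lambda>\<omega>. restrict (\<lambda>m. v m \<omega>) S) (\<lambda>\<omega>. restrict (\<lambda>m. v m \<omega>) Sb) = cH ?T X' Y'"
      unfolding Meq
    proof (rule cond_entropy_eq)
      show "finite {1..L}" by simp
      show "\<And>l. l \<in> {1..L} \<Longrightarrow> finite (C l) \<and> C l \<noteq> {}" by (rule Cfin)
      show "\<And>l. l \<in> {1..L} \<Longrightarrow> prob_space (N l)" by (rule probN)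
      show "\<And>\<omega>. restrict (\<lambda>m. v m \<omega>) S = X' (tv {1..L} \<omega>)" unfolding X'_def v_eq ..
      show "\<And>\<omega>. restrict (\<lambda>m. v m \<omega>) Sb = Y' (tv {1..L} \<omega>)" unfolding Y'_def v_eq ..
    qed
    have XPsi: "X' (Psi c) = (\<lambda>H. restrict (\<lambda>m. repm Q lo (H m)) S) (hR \<gamma> A L S c)" if "c \<in> ?CS" for c
      unfolding X'_def hR_def using vvPsi[OF that] by (auto simp: restrict_def fun_eq_iff)
    have YPsi: "Y' (Psi c) = (\<lambda>H. restrict (\<lambda>m. repm Q lo (H m)) Sb) (hR \<gamma> A L Sb c)" if "c \<in> ?CS" for c
      unfolding Y'_def hR_def using vvPsi[OF that] by (auto simp: restrict_def fun_eq_iff)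
    let ?a = "card {c'\<in>?CS. hR \<gamma> A L {1..L} c' = hR \<gamma> A L {1..L} (z0 L)}"
    let ?b = "card {c'\<in>?CS. hR \<gamma> A L Sb c' = hR \<gamma> A L Sb (z0 L)}"
    have cHv: "cH ?T X' Y' = log 2 ?b - log 2 ?a"
    proof (rule cH_fibers[OF Tfin])
      fix t assume t: "t \<in> ?T"
      have "t \<in> Psi ` ?CS" using t TPsi by simp
      then obtain c where c: "c \<in> ?CS" "t = Psi c" by blast
      have "card {t'\<in>?T. X' t' = X' t \<and> Y' t' = Y' t} = card {c'\<in>?CS. hR \<gamma> A L S c' = hR \<gamma> A L S c \<and> hR \<gamma> A L Sb c' = hR \<gamma> A L Sb c}"
        unfolding c(2) by (rule cH_transport(1)[where \<alpha>="\<lambda>H. restrict (\<lambda>m. repm Q lo (H m)) S" and F="hR \<gamma> A L S"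
              and \<beta>="\<lambda>H. restrict (\<lambda>m. repm Q lo (H m)) Sb" and H="hR \<gamma> A L Sb" and X=X' and Y=Y',
              OF bijPsi c(1) XPsi injgen[of S] YPsi injgen[of Sb]])
      also have "{c'\<in>?CS. hR \<gamma> A L S c' = hR \<gamma> A L S c \<and> hR \<gamma> A L Sb c' = hR \<gamma> A L Sb c} = {c'\<in>?CS. hR \<gamma> A L {1..L} c' = hR \<gamma> A L {1..L} c}"
        using S unfolding hR_eq_iff Sb_def by blast
      also have "card \<dots> = ?a" by (rule fibI[OF c(1)])
      finally show "card {t'\<in>?T. X' t' = X' t \<and> Y' t' = Y' t} = ?a" .
      have "card {t'\<in>?T. Y' t' = Y' t} = card {c'\<in>?CS. hR \<gamma> A L Sb c' = hR \<gamma> A L Sb c}"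
        unfolding c(2) by (rule cH_transport(2)[where \<alpha>="\<lambda>H. restrict (\<lambda>m. repm Q lo (H m)) S" and F="hR \<gamma> A L S"
              and \<beta>="\<lambda>H. restrict (\<lambda>m. repm Q lo (H m)) Sb" and H="hR \<gamma> A L Sb" and X=X' and Y=Y',
              OF bijPsi c(1) XPsi injgen[of S] YPsi injgen[of Sb]])
      also have "\<dots> = ?b" by (rule fibI[OF c(1)])
      finally show "card {t'\<in>?T. Y' t' = Y' t} = ?b" .
    qed
    have aeq: "real ?a = real (card ?CS) / real (card (hR \<gamma> A L {1..L} ` ?CS))"
      using CSfib[of "{1..L}"] impos[of "{1..L}"] by (simp add: field_simps)
    have beq: "real ?b = real (card ?CS) / real (card (hR \<gamma> A L Sb ` ?CS))"
      using CSfib[of Sb] impos[of Sb] by (simp add: field_simps)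
    have "cH ?T X' Y' = log 2 (real (card (hR \<gamma> A L {1..L} ` ?CS))) - log 2 (real (card (hR \<gamma> A L Sb ` ?CS)))"
      unfolding cHv aeq beq using cspos impos[of "{1..L}"] impos[of Sb] by (simp add: log_divide)
    also have "\<dots> = (\<Sum>j\<in>{lo<..top}. real (rank_mod \<gamma> A {1..L} (Lj L ic j)) - real (rank_mod \<gamma> A Sb (Lj L ic j))) * log 2 (real \<gamma>)"
      unfolding logim by (simp add: sum_subtractf left_diff_distrib)
    also have "(\<Sum>j\<in>{lo<..top}. real (rank_mod \<gamma> A {1..L} (Lj L ic j)) - real (rank_mod \<gamma> A Sb (Lj L ic j)))
        = (\<Sum>k\<in>{1..<2*L}. real (i (Suc k) - i k) * (real (rank_mod \<gamma> A {1..L} (Lk k)) - real (rank_mod \<gamma> A Sb (Lk k))))"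
      by (rule regr[of "\<lambda>J. real (rank_mod \<gamma> A {1..L} J) - real (rank_mod \<gamma> A Sb J)"])
    finally have cHf: "cH ?T X' Y' = (\<Sum>k\<in>{1..<2*L}. real (i (Suc k) - i k) * (real (rank_mod \<gamma> A {1..L} (Lk k)) - real (rank_mod \<gamma> A Sb (Lk k)))) * log 2 (real \<gamma>)" .
    have "f S = (\<Sum>k\<in>{1..<2*L}. (real (rank_mod \<gamma> A {1..L} (Lk k)) - real (rank_mod \<gamma> A Sb (Lk k))) * rv k)"
    proof -
      have "{1..2 * L - 1} = {1..<2*L}" using L_pos by auto
      thus ?thesis unfolding f_def Sb_def by simp
    qed
    also have "\<dots> = (1 / real CARD('n)) * ((\<Sum>k\<in>{1..<2*L}. real (i (Suc k) - i k) * (real (rank_mod \<gamma> A {1..L} (Lk k)) - real (rank_mod \<gamma> A Sb (Lk k)))) * log 2 (real \<gamma>))"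
    proof -
      have "(\<Sum>k\<in>{1..<2*L}. (real (rank_mod \<gamma> A {1..L} (Lk k)) - real (rank_mod \<gamma> A Sb (Lk k))) * rv k)
          = (\<Sum>k\<in>{1..<2*L}. (1 / real CARD('n)) * ((real (i (Suc k) - i k) * (real (rank_mod \<gamma> A {1..L} (Lk k)) - real (rank_mod \<gamma> A Sb (Lk k)))) * log 2 (real \<gamma>)))"
      proof (rule sum.cong[OF refl])
        fix k assume k: "k \<in> {1..<2*L}"
        show "(real (rank_mod \<gamma> A {1..L} (Lk k)) - real (rank_mod \<gamma> A Sb (Lk k))) * rv k
          = (1 / real CARD('n)) * ((real (i (Suc k) - i k) * (real (rank_mod \<gamma> A {1..L} (Lk k)) - real (rank_mod \<gamma> A Sb (Lk k)))) * log 2 (real \<gamma>))"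
          unfolding rv_eq[OF k] by (simp only: mult.assoc mult.commute mult.left_commute)
      qed
      thus ?thesis by (simp only: sum_distrib_left sum_distrib_right)
    qed
    finally have fS: "f S = (1 / real CARD('n)) * ((\<Sum>k\<in>{1..<2*L}. real (i (Suc k) - i k) * (real (rank_mod \<gamma> A {1..L} (Lk k)) - real (rank_mod \<gamma> A Sb (Lk k)))) * log 2 (real \<gamma>))" .
    have "cond_entropy_bits M (\<lambda>\<omega>. restrict (\<lambda>m. v m \<omega>) S) (\<lambda>\<omega>. restrict (\<lambda>m. v m \<omega>) Sb)
        = (\<Sum>k\<in>{1..<2*L}. real (i (Suc k) - i k) * (real (rank_mod \<gamma> A {1..L} (Lk k)) - real (rank_mod \<gamma> A Sb (Lk k)))) * log 2 (real \<gamma>)"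
      using ce cHf by simp
    thus ?thesis using fS unfolding Sb_def by simp
  qed
  show ?thesis
  proof (rule Collect_cong)
    fix R :: "nat \<Rightarrow> real"
    show "(R \<in> extensional {1..L} \<and> (\<forall>S\<subseteq>{1..L}. f S \<le> sum R S)) =
          (R \<in> extensional {1..L} \<and> (\<forall>S\<subseteq>{1..L}. (1 / real CARD('n)) * cond_entropy_bits M (\<lambda>\<omega>. restrict (\<lambda>m. v m \<omega>) S)
               (\<lambda>\<omega>. restrict (\<lambda>m. v m \<omega>) ({1..L} - S)) \<le> sum R S))"
      using key by auto
  qed
qed



end
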